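(* Let $G=(\pi,R)$ be a monogamy-of-entanglement game with $X=\{0,1\}$, $\pi$ uniform on $X$, and each $R(a|x)$ an orthogonal projection. Let $c(G)=\max_{a,b\in A}\big\|\sqrt{R(a|0)}\sqrt{R(b|1)}\big\|^2$. Then for every positive integer $n$, $\omega^\ast(G^n)\ \ge\ \omega(G^n)\ \ge\ \left(\frac12+\frac12\sqrt{c(G)}\right)^n.$
   Context: A monogamy-of-entanglement game $G=(\pi,R)$ consists of a finite nonempty question set $X$, a probability distribution $\pi$ on $X$, a finite nonempty answer set $A$, a positive integer $m$, and positive semidefinite $m\times m$ matrices $R(a|x)$ with $\sum_{a\in A}R(a|x)=\mathbb{1}$ for each $x\in X$. The quantum value $\omega^\ast(G)$ is the supremum, over finite-dimensional Hilbert spaces $\mathcal{A},\mathcal{B}$, density operators $\rho$ on $\mathbb{C}^m\otimes\mathcal{A}\otimes\mathcal{B}$, and POVMs $\{A^x_a:a\in A\}$ on $\mathcal{A}$, $\{B^x_a:a\in A\}$ on $\mathcal{B}$ (one for each $x$), of $\sum_x\pi(x)\sum_a\mathrm{Tr}((R(a|x)\otimes A^x_a\otimes B^x_a)\rho)$. The unentangled value $\omega(G)$ is the same supremum over fully separable $\rho$, equivalently $\omega(G)=\max_{f:X\to A}\|\sum_x\pi(x)R(f(x)|x)\|$ (operator norm). The $n$-fold parallel repetition $G^n$ is the monogamy-of-entanglement game with question set $X^n$, distribution $\pi^n(x_1,\dots,x_n)=\prod_i\pi(x_i)$, answer set $A^n$, referee space $(\mathbb{C}^m)^{\otimes n}$,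 and measurement operators $R(a_1\cdots a_n|x_1\cdots x_n)=R(a_1|x_1)\otimes\cdots\otimes R(a_n|x_n)$. *)

theory Defs
  imports "HOL-Analysis.Analysis" "Jordan_Normal_Form.Matrix"
begin

definition adj :: "complex mat \<Rightarrow> complex mat" where
  "adj M = mat (dim_col M) (dim_row M) (\<lambda>(i,j). cnj (M $$ (j,i)))"

definition cinner :: "complex vec \<Rightarrow> complex vec \<Rightarrow> complex" where
  "cinner v w = (\<Sum>i<dim_vec v. cnj (v $ i) * w $ i)"

definition vnorm :: "complex vec \<Rightarrow> real" where
  "vnorm v = sqrt (\<Sum>i<dim_vec v. (cmod (v $ i))\<^sup>2)"

definition op_norm :: "complex mat \<Rightarrow> real" where
  "op_norm M = Sup {vnorm (M *\<^sub>v v) | v. v \<in> carrier_vec (dim_col M) \<and> vnorm v = 1}"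

definition mtrace :: "complex mat \<Rightarrow> complex" where
  "mtrace M = (\<Sum>i<dim_row M. M $$ (i,i))"

definition kron :: "complex mat \<Rightarrow> complex mat \<Rightarrow> complex mat" where
  "kron A B = mat (dim_row A * dim_row B) (dim_col A * dim_col B)
     (\<lambda>(i,j). A $$ (i div dim_row B, j div dim_col B) * B $$ (i mod dim_row B, j mod dim_col B))"

definition psd :: "nat \<Rightarrow> complex mat \<Rightarrow> bool" where
  "psd d M \<longleftrightarrow> M \<in> carrier_mat d d \<and> adj M = M \<and>
     (\<forall>v \<in> carrier_vec d. 0 \<le> Re (cinner v (M *\<^sub>v v)))"

definition density :: "nat \<Rightarrow> complex mat \<Rightarrow> bool" where
  "density d \<rho> \<longleftrightarrow> psd d \<rho> \<and> mtrace \<rho> = 1"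

definition orth_proj :: "nat \<Rightarrow> complex mat \<Rightarrow> bool" where
  "orth_proj d P \<longleftrightarrow> P \<in> carrier_mat d d \<and> adj P = P \<and> P * P = P"

definition msqrt :: "complex mat \<Rightarrow> complex mat" where
  "msqrt M = (THE S. psd (dim_row M) S \<and> S * S = M)"

definition povm :: "nat \<Rightarrow> 'a set \<Rightarrow> ('a \<Rightarrow> complex mat) \<Rightarrow> bool" where
  "povm d Ans P \<longleftrightarrow> (\<forall>a\<in>Ans. psd d (P a)) \<and>
     mat d d (\<lambda>(i,j). \<Sum>a\<in>Ans. P a $$ (i,j)) = 1\<^sub>m d"

text \<open>A game is given by question set Q, distribution pd, answer set Ans, referee
  dimension m and measurements R a x.\<close>
definition moe_game :: "'q set \<Rightarrow> ('q \<Rightarrow> real) \<Rightarrow> 'a set \<Rightarrow> nat \<Rightarrow> ('a \<Rightarrow> 'q \<Rightarrow> complex mat) \<Rightarrow> bool" where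
  "moe_game Q pd Ans m R \<longleftrightarrow> finite Q \<and> Q \<noteq> {} \<and> (\<forall>x\<in>Q. 0 \<le> pd x) \<and> sum pd Q = 1 \<and>
     finite Ans \<and> Ans \<noteq> {} \<and> m > 0 \<and> (\<forall>x\<in>Q. povm m Ans (\<lambda>a. R a x))"

text \<open>Winning probability of a strategy (dA, dB, rho, A, B); rho lives on C^m (x) C^dA (x) C^dB.\<close>
definition win_prob :: "'q set \<Rightarrow> ('q \<Rightarrow> real) \<Rightarrow> 'a set \<Rightarrow> ('a \<Rightarrow> 'q \<Rightarrow> complex mat) \<Rightarrow>
    complex mat \<Rightarrow> ('q \<Rightarrow> 'a \<Rightarrow> complex mat) \<Rightarrow> ('q \<Rightarrow> 'a \<Rightarrow> complex mat) \<Rightarrow> real" where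
  "win_prob Q pd Ans R \<rho> PA PB =
     (\<Sum>x\<in>Q. pd x * (\<Sum>a\<in>Ans. Re (mtrace (kron (kron (R a x) (PA x a)) (PB x a) * \<rho>))))"

definition strategy :: "'q set \<Rightarrow> 'a set \<Rightarrow> nat \<Rightarrow> nat \<Rightarrow> nat \<Rightarrow>
    complex mat \<Rightarrow> ('q \<Rightarrow> 'a \<Rightarrow> complex mat) \<Rightarrow> ('q \<Rightarrow> 'a \<Rightarrow> complex mat) \<Rightarrow> bool" where
  "strategy Q Ans m dA dB \<rho> PA PB \<longleftrightarrow> 0 < dA \<and> 0 < dB \<and> density (m * dA * dB) \<rho> \<and>
     (\<forall>x\<in>Q. povm dA Ans (PA x)) \<and> (\<forall>x\<in>Q. povm dB Ans (PB x))"

definition fully_separable :: "nat \<Rightarrow> nat \<Rightarrow> nat \<Rightarrow> complex mat \<Rightarrow> bool" where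
  "fully_separable d1 d2 d3 \<rho> \<longleftrightarrow> (\<exists>(k::nat) p \<rho>1 \<rho>2 \<rho>3.
     (\<forall>i<k. 0 \<le> p i \<and> density d1 (\<rho>1 i) \<and> density d2 (\<rho>2 i) \<and> density d3 (\<rho>3 i)) \<and>
     (\<Sum>i<k. p i) = (1::real) \<and>
     \<rho> = mat (d1*d2*d3) (d1*d2*d3)
       (\<lambda>(r,c). \<Sum>i<k. complex_of_real (p i) * kron (kron (\<rho>1 i) (\<rho>2 i)) (\<rho>3 i) $$ (r,c)))"

definition qvalue :: "'q set \<Rightarrow> ('q \<Rightarrow> real) \<Rightarrow> 'a set \<Rightarrow> nat \<Rightarrow> ('a \<Rightarrow> 'q \<Rightarrow> complex mat) \<Rightarrow> real" where
  "qvalue Q pd Ans m R = Sup {win_prob Q pd Ans R \<rho> PA PB | dA dB \<rho> PA PB.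
      strategy Q Ans m dA dB \<rho> PA PB}"

definition uvalue :: "'q set \<Rightarrow> ('q \<Rightarrow> real) \<Rightarrow> 'a set \<Rightarrow> nat \<Rightarrow> ('a \<Rightarrow> 'q \<Rightarrow> complex mat) \<Rightarrow> real" where
  "uvalue Q pd Ans m R = Sup {win_prob Q pd Ans R \<rho> PA PB | dA dB \<rho> PA PB.
      strategy Q Ans m dA dB \<rho> PA PB \<and> fully_separable m dA dB \<rho>}"

definition rep_set :: "nat \<Rightarrow> 'b set \<Rightarrow> 'b list set" where
  "rep_set n S = {xs. length xs = n \<and> set xs \<subseteq> S}"

definition rep_pi :: "('q \<Rightarrow> real) \<Rightarrow> 'q list \<Rightarrow> real" where
  "rep_pi pd xs = prod_list (map pd xs)"

text \<open>R(a_1..a_n | x_1..x_n) = R(a_1|x_1) (x) ... (x) R(a_n|x_n) (for equal lengths).\<close>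
definition rep_R :: "('a \<Rightarrow> 'q \<Rightarrow> complex mat) \<Rightarrow> 'a list \<Rightarrow> 'q list \<Rightarrow> complex mat" where
  "rep_R R as xs = foldr (\<lambda>(a,x) M. kron (R a x) M) (zip as xs) (1\<^sub>m 1)"

end

theory Submission
  imports Defs
begin

definition qf :: "nat \<Rightarrow> (nat \<Rightarrow> nat \<Rightarrow> complex) \<Rightarrow> (nat \<Rightarrow> complex) \<Rightarrow> complex" where
  "qf d N w = (\<Sum>r<d. \<Sum>c<d. cnj (w r) * N r c * w c)"

definition psdf :: "nat \<Rightarrow> (nat \<Rightarrow> nat \<Rightarrow> complex) \<Rightarrow> bool" where
  "psdf d N \<longleftrightarrow> (\<forall>r<d. \<forall>c<d. N r c = cnj (N c r)) \<and> (\<forall>w. 0 \<le> Re (qf d N w))"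

definition sosf :: "nat \<Rightarrow> (nat \<Rightarrow> nat \<Rightarrow> complex) \<Rightarrow> bool" where
  "sosf d N \<longleftrightarrow> (\<exists>(K::nat) V. \<forall>r<d. \<forall>c<d. N r c = (\<Sum>i<K. V i r * cnj (V i c)))"

lemma qf_expand:
  assumes "k < d"
  shows "qf d N (\<lambda>r. w r + s * (if r = k then 1 else 0)) =
    qf d N w + cnj s * (\<Sum>c<d. N k c * w c) + s * (\<Sum>r<d. cnj (w r) * N r k) + cnj s * s * N k k"
proof -
  have e: "cnj (w r + s * (if r = k then 1 else 0)) * N r c * (w c + s * (if c = k then 1 else 0))
     = cnj (w r) * N r c * w c + (if r = k then cnj s * N k c * w c else 0)
       + (if c = k then s * cnj (w r) * N r k else 0)
       + (if r = k \<and> c = k then cnj s * s * N k k else 0)" for r c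
    by (auto simp: algebra_simps)
  have s1: "(\<Sum>r<d. \<Sum>c<d. (if r = k then f c else (0::complex))) = (\<Sum>c<d. f c)" for f
  proof -
    have "(\<Sum>r<d. \<Sum>c<d. (if r = k then f c else 0)) = (\<Sum>r<d. if r = k then (\<Sum>c<d. f c) else 0)"
      by (rule sum.cong) auto
    also have "\<dots> = (\<Sum>c<d. f c)" using assms by (simp add: sum.delta)
    finally show ?thesis .
  qed
  have s2: "(\<Sum>r<d. \<Sum>c<d. (if c = k then f r else (0::complex))) = (\<Sum>r<d. f r)" for f
    using assms by (simp add: sum.delta)
  have s3: "(\<Sum>r<d. \<Sum>c<d. (if r = k \<and> c = k then x else (0::complex))) = x" for x
  proof -
    have "(\<Sum>r<d. \<Sum>c<d. (if r = k \<and> c = k then x else (0::complex))) = (\<Sum>r<d. if r = k then x else 0)"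
      by (rule sum.cong) (auto simp: sum.delta assms)
    also have "\<dots> = x" using assms by (simp add: sum.delta)
    finally show ?thesis .
  qed
  show ?thesis unfolding qf_def e sum.distrib s1 s2 s3
    by (simp add: sum_distrib_left mult.assoc)
qed

lemma qf_zero: "qf d N (\<lambda>r. 0) = 0" by (simp add: qf_def)

lemma qf_ek: assumes "k < d" shows "qf d N (\<lambda>r. if r = k then 1 else 0) = N k k"
  using qf_expand[OF assms, of N "\<lambda>r. 0" 1] by (simp add: qf_zero)

lemma psdf_diag: assumes "psdf d N" "k < d" shows "N k k = complex_of_real (Re (N k k))" "0 \<le> Re (N k k)"
proof -
  have "N k k = cnj (N k k)" using assms unfolding psdf_def by blast
  then have "Im (N k k) = - Im (N k k)" by (metis cnj.sel(2))
  then have "Im (N k k) = 0" by linarith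
  then show "N k k = complex_of_real (Re (N k k))" by (simp add: complex_eq_iff)
  have "0 \<le> Re (qf d N (\<lambda>r. if r = k then 1 else 0))" using assms(1) unfolding psdf_def by blast
  then show "0 \<le> Re (N k k)" using qf_ek[OF assms(2), of N] by simp
qed

lemma cinner_mult: assumes "M \<in> carrier_mat d d"
  shows "cinner (vec d w) (M *\<^sub>v vec d w) = qf d (\<lambda>r c. M $$ (r,c)) w"
  using assms unfolding cinner_def qf_def
  by (simp add: scalar_prod_def sum_distrib_left mult.assoc atLeast0LessThan)

lemma psd_psdf: assumes "psd d M" shows "psdf d (\<lambda>r c. M $$ (r,c))"
proof -
  have M: "M \<in> carrier_mat d d" and A: "adj M = M" using assms unfolding psd_def by auto
  have h: "M $$ (r,c) = cnj (M $$ (c,r))" if "r < d" "c < d" for r c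
  proof -
    have "M $$ (r,c) = adj M $$ (r,c)" using A by simp
    also have "\<dots> = cnj (M $$ (c,r))" using M that unfolding adj_def by auto
    finally show ?thesis .
  qed
  have "0 \<le> Re (qf d (\<lambda>r c. M $$ (r,c)) w)" for w
    using assms cinner_mult[OF M, of w] unfolding psd_def by (metis vec_carrier)
  then show ?thesis unfolding psdf_def using h by blast
qed

lemma psdf_zero_row:
  assumes P: "psdf d N" and k: "k < d" and c: "c < d" and z: "N k k = 0"
  shows "N k c = 0"
proof (rule ccontr)
  assume nz: "N k c \<noteq> 0"
  then have ck: "c \<noteq> k" using z by auto
  define y where "y = N k c"
  have herm: "N c k = cnj y" using P k c unfolding psdf_def y_def by blast
  define x :: real where "x = (\<bar>Re (N c c)\<bar> + 1) / (2 * (cmod y)^2)"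
  have ypos: "0 < (cmod y)^2" using nz y_def by simp
  define s where "s = - complex_of_real x * y"
  let ?w = "\<lambda>r. if r = c then 1 else (0::complex)"
  have "qf d N (\<lambda>r. ?w r + s * (if r = k then 1 else 0)) =
        qf d N ?w + cnj s * (\<Sum>c'<d. N k c' * ?w c') + s * (\<Sum>r<d. cnj (?w r) * N r k) + cnj s * s * N k k"
    by (rule qf_expand[OF k])
  also have "(\<Sum>r<d. cnj (?w r) * N r k) = N c k"
  proof -
    have "(\<Sum>r<d. cnj (?w r) * N r k) = (\<Sum>r<d. if r = c then N r k else 0)"
      by (rule sum.cong) auto
    then show ?thesis using c by (simp add: sum.delta)
  qed
  also have "(\<Sum>c'<d. N k c' * ?w c') = N k c"
  proof -
    have "(\<Sum>c'<d. N k c' * ?w c') = (\<Sum>c'<d. if c' = c then N k c' else 0)"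
      by (rule sum.cong) auto
    then show ?thesis using c by (simp add: sum.delta)
  qed
  also have "qf d N ?w + cnj s * N k c + s * N c k + cnj s * s * N k k = N c c + cnj s * y + s * cnj y"
    using qf_ek[OF c, of N] z herm by (simp add: y_def)
  finally have eq: "qf d N (\<lambda>r. ?w r + s * (if r = k then 1 else 0)) = N c c + cnj s * y + s * cnj y" .
  have "Re (cnj s * y + s * cnj y) = - 2 * x * (cmod y)^2"
  proof -
    have cm: "(cmod y)^2 = Re y * Re y + Im y * Im y" by (metis cmod_power2 power2_eq_square)
    show ?thesis unfolding s_def cm by (simp add: algebra_simps)
  qed
  also have "\<dots> = - (\<bar>Re (N c c)\<bar> + 1)" unfolding x_def using ypos by (simp add: field_simps)
  finally have "Re (qf d N (\<lambda>r. ?w r + s * (if r = k then 1 else 0))) = Re (N c c) - (\<bar>Re (N c c)\<bar> + 1)"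
    unfolding eq by simp
  moreover have "0 \<le> Re (qf d N (\<lambda>r. ?w r + s * (if r = k then 1 else 0)))" using P unfolding psdf_def by blast
  ultimately show False by linarith
qed

lemma peel:
  assumes P0: "psdf d N0"
  shows "k \<le> d \<Longrightarrow> \<exists>N V. psdf d N \<and> (\<forall>r<d. \<forall>c<d. (r < k \<or> c < k) \<longrightarrow> N r c = 0) \<and>
     (\<forall>r<d. \<forall>c<d. N0 r c = N r c + (\<Sum>i<k. V i r * cnj (V i c)))"
proof (induction k)
  case 0
  then show ?case using P0 by (intro exI[of _ N0] exI[of _ "\<lambda>i r. 0"]) auto
next
  case (Suc k)
  then obtain N V where P: "psdf d N" and Z: "\<forall>r<d. \<forall>c<d. (r < k \<or> c < k) \<longrightarrow> N r c = 0"
    and D: "\<forall>r<d. \<forall>c<d. N0 r c = N r c + (\<Sum>i<k. V i r * cnj (V i c))" by auto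
  have k: "k < d" using Suc by auto
  have herm: "\<And>r c. r < d \<Longrightarrow> c < d \<Longrightarrow> N r c = cnj (N c r)" using P unfolding psdf_def by blast
  define \<alpha> where "\<alpha> = Re (N k k)"
  have a_eq: "N k k = complex_of_real \<alpha>" and a_ge: "0 \<le> \<alpha>" using psdf_diag[OF P k] \<alpha>_def by auto
  show ?case
  proof (cases "\<alpha> = 0")
    case True
    then have zk: "N k k = 0" using a_eq by simp
    have row: "\<And>c. c < d \<Longrightarrow> N k c = 0" using psdf_zero_row[OF P k _ zk] by auto
    have col: "\<And>r. r < d \<Longrightarrow> N r k = 0" using row herm k by (metis complex_cnj_zero)
    have z2: "\<forall>r<d. \<forall>c<d. (r < Suc k \<or> c < Suc k) \<longrightarrow> N r c = 0"
      using Z row col by (metis less_Suc_eq)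
    have d2: "\<forall>r<d. \<forall>c<d. N0 r c = N r c + (\<Sum>i<Suc k. (V(k := (\<lambda>r. 0))) i r * cnj ((V(k := (\<lambda>r. 0))) i c))"
      using D by simp
    show ?thesis using P z2 d2 by blast
  next
    case False
    then have apos: "0 < \<alpha>" using a_ge by simp
    define a where "a = complex_of_real \<alpha>"
    have anz: "a \<noteq> 0" using apos a_def by simp
    define V' where "V' = V(k := (\<lambda>r. N r k / complex_of_real (sqrt \<alpha>)))"
    define N' where "N' = (\<lambda>r c. N r c - N r k * N k c / a)"
    have outer: "V' k r * cnj (V' k c) = N r k * N k c / a" if "r < d" "c < d" for r c
    proof -
      have "V' k r * cnj (V' k c) = N r k * cnj (N c k) / (complex_of_real (sqrt \<alpha>))^2"
        unfolding V'_def by (simp add: power2_eq_square)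
      also have "\<dots> = N r k * N k c / a"
      proof -
        have h2: "cnj (N c k) = N k c" using herm[OF k that(2)] by simp
        show ?thesis using apos unfolding a_def h2 by (simp add: of_real_power[symmetric])
      qed
      finally show ?thesis .
    qed
    have herm': "N' r c = cnj (N' c r)" if "r < d" "c < d" for r c
    proof -
      have h1: "cnj (N c r) = N r c" using herm[OF that] by simp
      have h2: "cnj (N c k) = N k c" using herm[OF k that(2)] by simp
      have h3: "cnj (N k r) = N r k" using herm[OF that(1) k] by simp
      show ?thesis unfolding N'_def a_def by (simp add: h1 h2 h3)
    qed
    have qf': "Re (qf d N' w) \<ge> 0" for w
    proof -
      define \<beta> where "\<beta> = (\<Sum>c<d. N k c * w c)"
      have cb: "(\<Sum>r<d. cnj (w r) * N r k) = cnj \<beta>"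
      proof -
        have "(\<Sum>r<d. cnj (w r) * N r k) = (\<Sum>r<d. cnj (N k r * w r))"
        proof (rule sum.cong)
          fix r assume "r \<in> {..<d}"
          then have "N r k = cnj (N k r)" using herm k by blast
          then show "cnj (w r) * N r k = cnj (N k r * w r)" by (simp add: mult.commute)
        qed simp
        then show ?thesis unfolding \<beta>_def by simp
      qed
      have "qf d N' w = qf d N w - (\<Sum>r<d. \<Sum>c<d. cnj (w r) * N r k * (N k c * w c)) / a"
        unfolding qf_def N'_def by (simp add: algebra_simps sum_subtractf sum_divide_distrib)
      also have "(\<Sum>r<d. \<Sum>c<d. cnj (w r) * N r k * (N k c * w c)) = cnj \<beta> * \<beta>"
      proof -
        have "(\<Sum>r<d. \<Sum>c<d. cnj (w r) * N r k * (N k c * w c)) = (\<Sum>r<d. cnj (w r) * N r k) * \<beta>"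
          unfolding \<beta>_def by (simp add: sum_product)
        then show ?thesis using cb by simp
      qed
      finally have e1: "qf d N' w = qf d N w - cnj \<beta> * \<beta> / a" .
      define s where "s = - \<beta> / a"
      have "qf d N (\<lambda>r. w r + s * (if r = k then 1 else 0)) =
        qf d N w + cnj s * \<beta> + s * cnj \<beta> + cnj s * s * N k k"
        using qf_expand[OF k, of N w s] cb \<beta>_def by simp
      also have "\<dots> = qf d N w - cnj \<beta> * \<beta> / a"
        unfolding s_def a_eq a_def[symmetric] using anz a_def
        by (simp add: field_simps power2_eq_square)
      finally have "qf d N' w = qf d N (\<lambda>r. w r + s * (if r = k then 1 else 0))" using e1 by simp
      moreover have "0 \<le> Re (qf d N (\<lambda>r. w r + s * (if r = k then 1 else 0)))"
        using P unfolding psdf_def by blast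
      ultimately show ?thesis by simp
    qed
    have p2: "psdf d N'" unfolding psdf_def using herm' qf' by blast
    have z2: "\<forall>r<d. \<forall>c<d. (r < Suc k \<or> c < Suc k) \<longrightarrow> N' r c = 0"
    proof (intro allI impI)
      fix r c assume rc: "r < d" "c < d" "r < Suc k \<or> c < Suc k"
      consider "r < k" | "c < k" | "r = k" | "c = k" using rc(3) by linarith
      then show "N' r c = 0"
      proof cases
        case 1 then show ?thesis using Z rc k unfolding N'_def by auto
      next
        case 2 then show ?thesis using Z rc k unfolding N'_def by auto
      next
        case 3 then show ?thesis using anz a_eq a_def unfolding N'_def by auto
      next
        case 4 then show ?thesis using anz a_eq a_def unfolding N'_def by auto
      qed
    qed
    have d2: "\<forall>r<d. \<forall>c<d. N0 r c = N' r c + (\<Sum>i<Suc k. V' i r * cnj (V' i c))"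
    proof (intro allI impI)
      fix r c assume rc: "r < d" "c < d"
      have "(\<Sum>i<Suc k. V' i r * cnj (V' i c)) = (\<Sum>i<k. V i r * cnj (V i c)) + N r k * N k c / a"
        using outer[OF rc] by (simp add: V'_def)
      then show "N0 r c = N' r c + (\<Sum>i<Suc k. V' i r * cnj (V' i c))"
        using D rc unfolding N'_def by simp
    qed
    show ?thesis using p2 z2 d2 by blast
  qed
qed

lemma psdf_sosf: assumes "psdf d N" shows "sosf d N"
proof -
  obtain N' V where Z: "\<forall>r<d. \<forall>c<d. (r < d \<or> c < d) \<longrightarrow> N' r c = 0"
    and D: "\<forall>r<d. \<forall>c<d. N r c = N' r c + (\<Sum>i<d. V i r * cnj (V i c))"
    using peel[OF assms, of d] by blast
  show ?thesis unfolding sosf_def using Z D by (intro exI[of _ d] exI[of _ V]) auto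
qed

lemma psd_sosf: "psd d M \<Longrightarrow> sosf d (\<lambda>r c. M $$ (r,c))"
  using psd_psdf psdf_sosf by blast

lemma sum_divmod: "(\<Sum>l<(a::nat)*b. g (l div b) (l mod b)) = (\<Sum>i<a. \<Sum>j<b. (g i j :: 'c::comm_monoid_add))"
proof -
  have "(\<Sum>i<a. \<Sum>j<b. g i j) = (\<Sum>p\<in>{..<a}\<times>{..<b}. g (fst p) (snd p))"
    by (simp add: sum.cartesian_product split_beta)
  also have "\<dots> = (\<Sum>l<a*b. g (l div b) (l mod b))"
  proof (rule sum.reindex_bij_witness[where i="\<lambda>l. (l div b, l mod b)" and j="\<lambda>p. fst p * b + snd p"])
    fix p assume p: "p \<in> {..<a} \<times> {..<b}"
    obtain i j where ij: "p = (i,j)" "i < a" "j < b" using p by auto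
    have "i * b + j < (i+1) * b" using ij by simp
    also have "\<dots> \<le> a * b" using ij by (intro mult_right_mono) auto
    finally show "fst p * b + snd p \<in> {..<a*b}" using ij by simp
    show "(((fst p * b + snd p) div b), (fst p * b + snd p) mod b) = p" using ij by auto
    show "g ((fst p * b + snd p) div b) ((fst p * b + snd p) mod b) = g (fst p) (snd p)" using ij by auto
  next
    fix l assume l: "l \<in> {..<a*b}"
    then have b: "0 < b" by (cases "b = 0") auto
    show "fst (l div b, l mod b) * b + snd (l div b, l mod b) = l" by simp
    show "(l div b, l mod b) \<in> {..<a} \<times> {..<b}" using l b by (auto simp: less_mult_imp_div_less)
  qed
  finally show ?thesis by simp
qed

lemma kron_carrier: "A \<in> carrier_mat n1 n1 \<Longrightarrow> B \<in> carrier_mat n2 n2 \<Longrightarrow> kron A B \<in> carrier_mat (n1*n2) (n1*n2)"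
  unfolding kron_def by auto

lemma kron_dims[simp]: "dim_row (kron A B) = dim_row A * dim_row B" "dim_col (kron A B) = dim_col A * dim_col B"
  unfolding kron_def by auto

lemma kron_index: assumes "A \<in> carrier_mat n1 n1" "B \<in> carrier_mat n2 n2" "r < n1*n2" "c < n1*n2"
  shows "kron A B $$ (r,c) = A $$ (r div n2, c div n2) * B $$ (r mod n2, c mod n2)"
  using assms unfolding kron_def by auto

lemma mtrace_mult: assumes "A \<in> carrier_mat n n" "B \<in> carrier_mat n n"
  shows "mtrace (A * B) = (\<Sum>r<n. \<Sum>c<n. A $$ (r,c) * B $$ (c,r))"
  using assms unfolding mtrace_def by (simp add: scalar_prod_def atLeast0LessThan)

lemma mtrace_kron: assumes "A \<in> carrier_mat n1 n1" "B \<in> carrier_mat n2 n2"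
  shows "mtrace (kron A B) = mtrace A * mtrace B"
proof -
  have "mtrace (kron A B) = (\<Sum>l<n1*n2. A $$ (l div n2, l div n2) * B $$ (l mod n2, l mod n2))"
    unfolding mtrace_def using assms by (simp add: kron_index)
  also have "\<dots> = (\<Sum>i<n1. \<Sum>j<n2. A $$ (i,i) * B $$ (j,j))" by (rule sum_divmod)
  also have "\<dots> = mtrace A * mtrace B" using assms unfolding mtrace_def by (simp add: sum_product)
  finally show ?thesis .
qed

lemma mtrace_kron_mult: assumes "A \<in> carrier_mat n1 n1" "B \<in> carrier_mat n2 n2"
  "C \<in> carrier_mat n1 n1" "D \<in> carrier_mat n2 n2"
  shows "mtrace (kron A B * kron C D) = mtrace (A * C) * mtrace (B * D)"
proof -
  have "mtrace (kron A B * kron C D) = (\<Sum>r<n1*n2. \<Sum>c<n1*n2. kron A B $$ (r,c) * kron C D $$ (c,r))"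
    using assms by (intro mtrace_mult kron_carrier)
  also have "\<dots> = (\<Sum>r<n1*n2. \<Sum>c<n1*n2. (A $$ (r div n2, c div n2) * B $$ (r mod n2, c mod n2)) *
        (C $$ (c div n2, r div n2) * D $$ (c mod n2, r mod n2)))"
    using assms by (simp add: kron_index)
  also have "\<dots> = (\<Sum>r1<n1. \<Sum>r2<n2. \<Sum>c<n1*n2. (A $$ (r1, c div n2) * B $$ (r2, c mod n2)) *
        (C $$ (c div n2, r1) * D $$ (c mod n2, r2)))"
    by (rule sum_divmod[where g="\<lambda>i j. \<Sum>c<n1*n2. (A $$ (i, c div n2) * B $$ (j, c mod n2)) *
        (C $$ (c div n2, i) * D $$ (c mod n2, j))"])
  also have "\<dots> = (\<Sum>r1<n1. \<Sum>r2<n2. \<Sum>c1<n1. \<Sum>c2<n2. (A $$ (r1, c1) * B $$ (r2, c2)) *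
        (C $$ (c1, r1) * D $$ (c2, r2)))"
    by (subst sum_divmod[where g="\<lambda>i j. (A $$ (_, i) * B $$ (_, j)) * (C $$ (i, _) * D $$ (j, _))"]) simp
  also have "\<dots> = (\<Sum>r1<n1. \<Sum>c1<n1. A $$ (r1, c1) * C $$ (c1, r1)) * (\<Sum>r2<n2. \<Sum>c2<n2. B $$ (r2, c2) * D $$ (c2, r2))"
    by (simp add: sum_product sum_distrib_left sum_distrib_right algebra_simps sum.swap[of _ "{..<n2}" "{..<n1}"])
  also have "\<dots> = mtrace (A * C) * mtrace (B * D)" using assms by (simp add: mtrace_mult)
  finally show ?thesis .
qed

lemma sum_swap3: "(\<Sum>r\<in>A. \<Sum>c\<in>B. \<Sum>i\<in>C. F r c i) = (\<Sum>i\<in>C. \<Sum>r\<in>A. \<Sum>c\<in>B. F r c i)"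
proof -
  have "(\<Sum>r\<in>A. \<Sum>c\<in>B. \<Sum>i\<in>C. F r c i) = (\<Sum>r\<in>A. \<Sum>i\<in>C. \<Sum>c\<in>B. F r c i)"
    by (rule sum.cong[OF refl], rule sum.swap)
  also have "\<dots> = (\<Sum>i\<in>C. \<Sum>r\<in>A. \<Sum>c\<in>B. F r c i)" by (rule sum.swap)
  finally show ?thesis .
qed

definition msos :: "nat \<Rightarrow> complex mat \<Rightarrow> bool" where
  "msos d M \<longleftrightarrow> M \<in> carrier_mat d d \<and> sosf d (\<lambda>r c. M $$ (r,c))"

lemma psd_carrier: "psd d M \<Longrightarrow> M \<in> carrier_mat d d"
  unfolding psd_def by simp

lemma psd_msos: assumes "psd d M" shows "msos d M"
  unfolding msos_def using psd_sosf[OF assms] psd_carrier[OF assms] by simp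

lemma sosf_M: "sosf d (\<lambda>r c. M $$ (r,c)) \<longleftrightarrow> (\<exists>(K::nat) V. \<forall>r<d. \<forall>c<d. M $$ (r,c) = (\<Sum>i<K. V i r * cnj (V i c)))"
  by (simp add: sosf_def)

lemma msosE: assumes "msos d M"
  obtains K :: nat and V where "M \<in> carrier_mat d d" "\<forall>r<d. \<forall>c<d. M $$ (r,c) = (\<Sum>i<K. V i r * cnj (V i c))"
proof -
  have C: "M \<in> carrier_mat d d" and E: "sosf d (\<lambda>r c. M $$ (r,c))"
    using assms unfolding msos_def by auto
  from E[unfolded sosf_M] obtain K :: nat and V where "\<forall>r<d. \<forall>c<d. M $$ (r,c) = (\<Sum>i<K. V i r * cnj (V i c))" by blast
  then show ?thesis using that C by blast
qed

lemma msos_kron: assumes A: "msos d1 A" and B: "msos d2 B" shows "msos (d1*d2) (kron A B)"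
proof -
  have Ac: "A \<in> carrier_mat d1 d1" and Bc: "B \<in> carrier_mat d2 d2" using A B unfolding msos_def by auto
  obtain K1 :: nat and V1 where V1: "\<forall>r<d1. \<forall>c<d1. A $$ (r,c) = (\<Sum>i<K1. V1 i r * cnj (V1 i c))"
    using A by (rule msosE) auto
  obtain K2 :: nat and V2 where V2: "\<forall>r<d2. \<forall>c<d2. B $$ (r,c) = (\<Sum>i<K2. V2 i r * cnj (V2 i c))"
    using B by (rule msosE) auto
  define V where "V = (\<lambda>l r. V1 (l div K2) (r div d2) * V2 (l mod K2) (r mod d2))"
  have "kron A B $$ (r,c) = (\<Sum>l<K1*K2. V l r * cnj (V l c))" if rc: "r < d1*d2" "c < d1*d2" for r c
  proof -
    have d2: "0 < d2" using rc by (cases "d2 = 0") auto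
    have r1: "r div d2 < d1" "c div d2 < d1" using rc by (auto simp: less_mult_imp_div_less)
    have r2: "r mod d2 < d2" "c mod d2 < d2" using d2 by auto
    have "kron A B $$ (r,c) = A $$ (r div d2, c div d2) * B $$ (r mod d2, c mod d2)"
      using kron_index[OF Ac Bc rc] .
    also have "\<dots> = (\<Sum>i<K1. V1 i (r div d2) * cnj (V1 i (c div d2))) * (\<Sum>j<K2. V2 j (r mod d2) * cnj (V2 j (c mod d2)))"
      using V1 V2 r1 r2 by simp
    also have "\<dots> = (\<Sum>i<K1. \<Sum>j<K2. (V1 i (r div d2) * V2 j (r mod d2)) * cnj (V1 i (c div d2) * V2 j (c mod d2)))"
      by (simp add: sum_product algebra_simps)
    also have "\<dots> = (\<Sum>l<K1*K2. V l r * cnj (V l c))"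
      unfolding V_def by (rule sum_divmod[symmetric, where g="\<lambda>i j. (V1 i (r div d2) * V2 j (r mod d2)) * cnj (V1 i (c div d2) * V2 j (c mod d2))"])
    finally show ?thesis .
  qed
  then show ?thesis unfolding msos_def sosf_def using kron_carrier[OF Ac Bc] by blast
qed

lemma msos_one: "msos 1 (1\<^sub>m 1)"
  unfolding msos_def sosf_def by (intro conjI exI[of _ 1] exI[of _ "\<lambda>i r. 1"]) auto

lemma msos_trace: assumes K: "msos d K" and P: "psd d \<rho>" shows "0 \<le> Re (mtrace (K * \<rho>))"
proof -
  have Kc: "K \<in> carrier_mat d d" using K unfolding msos_def by auto
  have Pc: "\<rho> \<in> carrier_mat d d" using psd_carrier[OF P] .
  obtain N :: nat and V where V: "\<forall>r<d. \<forall>c<d. K $$ (r,c) = (\<Sum>i<N. V i r * cnj (V i c))"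
    using K by (rule msosE) auto
  have pf: "psdf d (\<lambda>r c. \<rho> $$ (r,c))" by (rule psd_psdf[OF P])
  have "mtrace (K * \<rho>) = (\<Sum>r<d. \<Sum>c<d. K $$ (r,c) * \<rho> $$ (c,r))" by (rule mtrace_mult[OF Kc Pc])
  also have "\<dots> = (\<Sum>r<d. \<Sum>c<d. \<Sum>i<N. V i r * cnj (V i c) * \<rho> $$ (c,r))"
    using V by (simp add: sum_distrib_right)
  also have "\<dots> = (\<Sum>i<N. \<Sum>r<d. \<Sum>c<d. V i r * cnj (V i c) * \<rho> $$ (c,r))"
    by (rule sum_swap3)
  also have "\<dots> = (\<Sum>i<N. \<Sum>c<d. \<Sum>r<d. V i r * cnj (V i c) * \<rho> $$ (c,r))"
    by (rule sum.cong[OF refl], rule sum.swap)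
  also have "\<dots> = (\<Sum>i<N. \<Sum>c<d. \<Sum>r<d. cnj (V i c) * \<rho> $$ (c,r) * V i r)"
    by (simp add: mult.commute mult.left_commute)
  also have "\<dots> = (\<Sum>i<N. qf d (\<lambda>r c. \<rho> $$ (r,c)) (V i))" unfolding qf_def by simp
  finally have e: "Re (mtrace (K * \<rho>)) = (\<Sum>i<N. Re (qf d (\<lambda>r c. \<rho> $$ (r,c)) (V i)))" by simp
  show ?thesis unfolding e using pf unfolding psdf_def by (intro sum_nonneg) blast
qed

lemma msos_psd: assumes K: "msos d K" shows "psd d K"
proof -
  have Kc: "K \<in> carrier_mat d d" using K unfolding msos_def by auto
  obtain N :: nat and V where V: "\<forall>r<d. \<forall>c<d. K $$ (r,c) = (\<Sum>i<N. V i r * cnj (V i c))"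
    using K by (rule msosE) auto
  have adj: "adj K = K"
  proof (rule eq_matI)
    fix i j assume ij: "i < dim_row K" "j < dim_col K"
    then have "i < d" "j < d" using Kc by auto
    then show "adj K $$ (i,j) = K $$ (i,j)" using Kc V unfolding adj_def by (simp add: mult.commute)
  qed (use Kc in \<open>auto simp: adj_def\<close>)
  have "0 \<le> Re (cinner v (K *\<^sub>v v))" if v: "v \<in> carrier_vec d" for v
  proof -
    define w where "w = (\<lambda>i. v $ i)"
    have vw: "v = vec d w" using v unfolding w_def by auto
    define z where "z = (\<lambda>i. \<Sum>c<d. cnj (V i c) * w c)"
    have "qf d (\<lambda>r c. K $$ (r,c)) w = (\<Sum>r<d. \<Sum>c<d. \<Sum>i<N. cnj (w r) * V i r * (cnj (V i c) * w c))"
      unfolding qf_def using V by (simp add: sum_distrib_left sum_distrib_right mult.assoc)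
    also have "\<dots> = (\<Sum>i<N. \<Sum>r<d. \<Sum>c<d. cnj (w r) * V i r * (cnj (V i c) * w c))"
      by (rule sum_swap3)
    also have "\<dots> = (\<Sum>i<N. (\<Sum>r<d. cnj (w r) * V i r) * (\<Sum>c<d. cnj (V i c) * w c))"
      by (simp add: sum_product)
    also have "\<dots> = (\<Sum>i<N. cnj (z i) * z i)"
      unfolding z_def by (simp add: mult.commute)
    finally have "Re (qf d (\<lambda>r c. K $$ (r,c)) w) = (\<Sum>i<N. Re (cnj (z i) * z i))" by simp
    also have "\<dots> \<ge> 0" by (intro sum_nonneg) (simp add: mult.commute)
    finally show ?thesis using cinner_mult[OF Kc, of w] vw by simp
  qed
  then show ?thesis unfolding psd_def using Kc adj by blast
qed

lemma divmod_eq: "(a div q = b div q \<and> a mod q = b mod (q::nat)) \<longleftrightarrow> a = b"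
  by (metis div_mult_mod_eq)

lemma mtrace_kron3:
  assumes A: "A \<in> carrier_mat n1 n1" and B: "B \<in> carrier_mat n2 n2" and C: "C \<in> carrier_mat n3 n3"
    and P: "\<rho> \<in> carrier_mat (n1*n2*n3) (n1*n2*n3)"
  shows "mtrace (kron (kron A B) C * \<rho>) = (\<Sum>r<n1*n2*n3. \<Sum>s<n1*n2*n3.
     A $$ (r div n3 div n2, s div n3 div n2) * B $$ (r div n3 mod n2, s div n3 mod n2) *
     C $$ (r mod n3, s mod n3) * \<rho> $$ (s, r))"
proof -
  have AB: "kron A B \<in> carrier_mat (n1*n2) (n1*n2)" by (rule kron_carrier[OF A B])
  have ABC: "kron (kron A B) C \<in> carrier_mat (n1*n2*n3) (n1*n2*n3)" by (rule kron_carrier[OF AB C])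
  have e: "kron (kron A B) C $$ (r,s) = A $$ (r div n3 div n2, s div n3 div n2) * B $$ (r div n3 mod n2, s div n3 mod n2) *
     C $$ (r mod n3, s mod n3)" if rs: "r < n1*n2*n3" "s < n1*n2*n3" for r s
  proof -
    have n3: "0 < n3" using rs by (cases "n3 = 0") auto
    have "r div n3 < n1*n2" "s div n3 < n1*n2" using rs by (auto simp: less_mult_imp_div_less)
    then show ?thesis using kron_index[OF AB C rs] kron_index[OF A B] by simp
  qed
  show ?thesis unfolding mtrace_mult[OF ABC P] by (rule sum.cong[OF refl], rule sum.cong[OF refl]) (simp add: e)
qed

lemma rep_R_Nil[simp]: "rep_R R [] [] = 1\<^sub>m 1" unfolding rep_R_def by simp
lemma rep_R_Cons[simp]: "rep_R R (a#as) (x#xs) = kron (R a x) (rep_R R as xs)" unfolding rep_R_def by simp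

lemma rep_set_0[simp]: "rep_set 0 S = {[]}" unfolding rep_set_def by auto

lemma rep_set_Suc: "rep_set (Suc n) S = (\<lambda>p. fst p # snd p) ` (S \<times> rep_set n S)"
proof
  show "rep_set (Suc n) S \<subseteq> (\<lambda>p. fst p # snd p) ` (S \<times> rep_set n S)"
  proof
    fix xs assume "xs \<in> rep_set (Suc n) S"
    then obtain y ys where "xs = y # ys" "y \<in> S" "ys \<in> rep_set n S"
      unfolding rep_set_def by (cases xs) auto
    then show "xs \<in> (\<lambda>p. fst p # snd p) ` (S \<times> rep_set n S)" by force
  qed
qed (auto simp: rep_set_def)

lemma finite_rep_set: "finite S \<Longrightarrow> finite (rep_set n S)"
  by (induction n) (auto simp: rep_set_Suc)

lemma sum_rep_set_Suc: "(\<Sum>xs\<in>rep_set (Suc n) S. F xs) = (\<Sum>x\<in>S. \<Sum>xs\<in>rep_set n S. F (x # xs))"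
proof -
  have inj: "inj_on (\<lambda>p. fst p # snd p) (S \<times> rep_set n S)" by (auto simp: inj_on_def)
  have "(\<Sum>xs\<in>rep_set (Suc n) S. F xs) = (\<Sum>p\<in>S \<times> rep_set n S. F (fst p # snd p))"
    unfolding rep_set_Suc by (simp add: sum.reindex[OF inj])
  also have "\<dots> = (\<Sum>x\<in>S. \<Sum>xs\<in>rep_set n S. F (x # xs))"
    by (simp add: sum.cartesian_product split_beta)
  finally show ?thesis .
qed

lemma sum_rep_set_prod: "(\<Sum>xs\<in>rep_set n S. prod_list (map (h::_ \<Rightarrow> real) xs)) = (\<Sum>x\<in>S. h x) ^ n"
proof (induction n)
  case (Suc n)
  have "(\<Sum>xs\<in>rep_set (Suc n) S. prod_list (map h xs)) = (\<Sum>x\<in>S. h x * (\<Sum>xs\<in>rep_set n S. prod_list (map h xs)))"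
    by (simp add: sum_rep_set_Suc sum_distrib_left)
  then show ?case by (simp add: Suc sum_distrib_right[symmetric])
qed simp

lemma msos_carrier: "msos d M \<Longrightarrow> M \<in> carrier_mat d d" unfolding msos_def by simp

lemma rep_props:
  assumes P: "\<forall>x\<in>Q. \<forall>a\<in>S. msos m (R a x)"
    and U: "\<forall>x\<in>Q. \<forall>i<m. \<forall>j<m. (\<Sum>a\<in>S. R a x $$ (i,j)) = (if i = j then 1 else 0)"
  shows "xs \<in> rep_set n Q \<Longrightarrow> (\<forall>as\<in>rep_set n S. msos (m^n) (rep_R R as xs)) \<and>
     (\<forall>i<m^n. \<forall>j<m^n. (\<Sum>as\<in>rep_set n S. rep_R R as xs $$ (i,j)) = (if i = j then 1 else 0))"
proof (induction n arbitrary: xs)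
  case 0
  then have "xs = []" unfolding rep_set_def by auto
  then show ?case using msos_one by simp
next
  case (Suc n)
  then obtain x xs' where xs: "xs = x # xs'" "x \<in> Q" "xs' \<in> rep_set n Q"
    unfolding rep_set_def by (cases xs) auto
  from Suc.IH[OF xs(3)] have IH1: "\<forall>as\<in>rep_set n S. msos (m^n) (rep_R R as xs')"
    and IH2: "\<forall>i<m^n. \<forall>j<m^n. (\<Sum>as\<in>rep_set n S. rep_R R as xs' $$ (i,j)) = (if i = j then 1 else 0)" by auto
  have A1: "\<forall>as\<in>rep_set (Suc n) S. msos (m^Suc n) (rep_R R as xs)"
  proof
    fix as assume "as \<in> rep_set (Suc n) S"
    then obtain a as' where as: "as = a # as'" "a \<in> S" "as' \<in> rep_set n S"
      unfolding rep_set_def by (cases as) auto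
    show "msos (m^Suc n) (rep_R R as xs)"
      using msos_kron[of m "R a x" "m^n" "rep_R R as' xs'"] P xs as IH1 by simp
  qed
  have A2: "(\<Sum>as\<in>rep_set (Suc n) S. rep_R R as xs $$ (i,j)) = (if i = j then 1 else 0)"
    if ij: "i < m^Suc n" "j < m^Suc n" for i j
  proof -
    have ij': "i < m * m^n" "j < m * m^n" using ij by auto
    have mn: "0 < m^n" using ij by (cases "m^n = 0") auto
    have d1: "i div m^n < m" "j div m^n < m" using ij' by (auto simp: less_mult_imp_div_less mult.commute)
    have d2: "i mod m^n < m^n" "j mod m^n < m^n" using mn by auto
    have "(\<Sum>as\<in>rep_set (Suc n) S. rep_R R as xs $$ (i,j)) =
        (\<Sum>a\<in>S. \<Sum>as'\<in>rep_set n S. kron (R a x) (rep_R R as' xs') $$ (i,j))"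
      unfolding sum_rep_set_Suc xs by simp
    also have "\<dots> = (\<Sum>a\<in>S. \<Sum>as'\<in>rep_set n S. R a x $$ (i div m^n, j div m^n) * rep_R R as' xs' $$ (i mod m^n, j mod m^n))"
    proof (rule sum.cong[OF refl], rule sum.cong[OF refl])
      fix a as' assume "a \<in> S" "as' \<in> rep_set n S"
      then have "R a x \<in> carrier_mat m m" "rep_R R as' xs' \<in> carrier_mat (m^n) (m^n)"
        using P xs IH1 msos_carrier by auto
      then show "kron (R a x) (rep_R R as' xs') $$ (i,j) = R a x $$ (i div m^n, j div m^n) * rep_R R as' xs' $$ (i mod m^n, j mod m^n)"
        using kron_index ij' by blast
    qed
    also have "\<dots> = (\<Sum>a\<in>S. R a x $$ (i div m^n, j div m^n)) * (\<Sum>as'\<in>rep_set n S. rep_R R as' xs' $$ (i mod m^n, j mod m^n))"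
      by (simp add: sum_product)
    also have "\<dots> = (if i div m^n = j div m^n then 1 else 0) * (if i mod m^n = j mod m^n then 1 else 0)"
      using U xs d1 IH2 d2 by simp
    also have "\<dots> = (if i = j then 1 else 0)" using divmod_eq[of i "m^n" j] by auto
    finally show ?thesis .
  qed
  show ?case using A1 A2 by blast
qed

lemma povm_entries: assumes "povm d S P" "i < d" "j < d"
  shows "(\<Sum>a\<in>S. P a $$ (i,j)) = (if i = j then 1 else 0)"
proof -
  have e: "mat d d (\<lambda>(i,j). \<Sum>a\<in>S. P a $$ (i,j)) = 1\<^sub>m d" using assms(1) unfolding povm_def by blast
  have "mat d d (\<lambda>(i,j). \<Sum>a\<in>S. P a $$ (i,j)) $$ (i,j) = 1\<^sub>m d $$ (i,j)" by (simp only: e)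
  then show ?thesis using assms(2,3) by simp
qed

lemma povm_psd: "povm d S P \<Longrightarrow> a \<in> S \<Longrightarrow> psd d (P a)" unfolding povm_def by blast

lemma sum_interchange5:
  "(\<Sum>c\<in>C. \<Sum>b\<in>B. \<Sum>a\<in>A. \<Sum>r\<in>R. \<Sum>s\<in>S'. f a r s * (g b r s * (h c r s * (k r s :: complex)))) =
   (\<Sum>r\<in>R. \<Sum>s\<in>S'. (\<Sum>a\<in>A. f a r s) * (\<Sum>b\<in>B. g b r s) * (\<Sum>c\<in>C. h c r s) * k r s)"
proof -
  have "(\<Sum>r\<in>R. \<Sum>s\<in>S'. (\<Sum>a\<in>A. f a r s) * (\<Sum>b\<in>B. g b r s) * (\<Sum>c\<in>C. h c r s) * k r s) =
     (\<Sum>r\<in>R. \<Sum>s\<in>S'. \<Sum>c\<in>C. \<Sum>b\<in>B. \<Sum>a\<in>A. f a r s * (g b r s * (h c r s * k r s)))"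
    by (simp add: sum_distrib_left sum_distrib_right mult.assoc)
  also have "\<dots> = (\<Sum>c\<in>C. \<Sum>r\<in>R. \<Sum>s\<in>S'. \<Sum>b\<in>B. \<Sum>a\<in>A. f a r s * (g b r s * (h c r s * k r s)))"
    by (rule sum_swap3)
  also have "\<dots> = (\<Sum>c\<in>C. \<Sum>b\<in>B. \<Sum>r\<in>R. \<Sum>s\<in>S'. \<Sum>a\<in>A. f a r s * (g b r s * (h c r s * k r s)))"
    by (rule sum.cong[OF refl], rule sum_swap3)
  also have "\<dots> = (\<Sum>c\<in>C. \<Sum>b\<in>B. \<Sum>a\<in>A. \<Sum>r\<in>R. \<Sum>s\<in>S'. f a r s * (g b r s * (h c r s * k r s)))"
    by (rule sum.cong[OF refl], rule sum.cong[OF refl], rule sum_swap3)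
  finally show ?thesis by simp
qed

lemma round_le:
  assumes fS: "finite S"
    and P: "\<forall>a\<in>S. msos M (RR a)"
    and U: "\<forall>i<M. \<forall>j<M. (\<Sum>a\<in>S. RR a $$ (i,j)) = (if i = j then 1 else 0)"
    and PA: "povm dA S PA" and PB: "povm dB S PB" and D: "density (M*dA*dB) \<rho>"
  shows "(\<Sum>a\<in>S. Re (mtrace (kron (kron (RR a) (PA a)) (PB a) * \<rho>))) \<le> 1"
proof -
  let ?N = "M*dA*dB"
  have rp: "psd ?N \<rho>" and tr: "mtrace \<rho> = 1" using D unfolding density_def by auto
  have rc: "\<rho> \<in> carrier_mat ?N ?N" using psd_carrier[OF rp] .
  define T where "T a b c = Re (mtrace (kron (kron (RR a) (PA b)) (PB c) * \<rho>))" for a b c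
  have Tnn: "0 \<le> T a b c" if "a \<in> S" "b \<in> S" "c \<in> S" for a b c
  proof -
    have "msos (M*dA) (kron (RR a) (PA b))"
      using msos_kron P that psd_msos povm_psd[OF PA] by blast
    then have "msos ?N (kron (kron (RR a) (PA b)) (PB c))"
      using msos_kron psd_msos povm_psd[OF PB] that by blast
    then show ?thesis unfolding T_def using msos_trace rp by blast
  qed
  have step1: "(\<Sum>a\<in>S. T a a a) \<le> (\<Sum>a\<in>S. \<Sum>b\<in>S. \<Sum>c\<in>S. T a b c)"
  proof (rule sum_mono)
    fix a assume a: "a \<in> S"
    have "T a a a \<le> (\<Sum>c\<in>S. T a a c)" using a Tnn fS by (intro member_le_sum) auto
    also have "\<dots> \<le> (\<Sum>b\<in>S. \<Sum>c\<in>S. T a b c)"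
      using a Tnn fS by (intro member_le_sum[where f="\<lambda>b. \<Sum>c\<in>S. T a b c"] sum_nonneg) auto
    finally show "T a a a \<le> (\<Sum>b\<in>S. \<Sum>c\<in>S. T a b c)" .
  qed
  have swp: "(\<Sum>a\<in>S. \<Sum>b\<in>S. \<Sum>c\<in>S. T a b c) = (\<Sum>c\<in>S. \<Sum>b\<in>S. \<Sum>a\<in>S. T a b c)"
  proof -
    have "(\<Sum>a\<in>S. \<Sum>b\<in>S. \<Sum>c\<in>S. T a b c) = (\<Sum>c\<in>S. \<Sum>a\<in>S. \<Sum>b\<in>S. T a b c)" by (rule sum_swap3)
    also have "\<dots> = (\<Sum>c\<in>S. \<Sum>b\<in>S. \<Sum>a\<in>S. T a b c)" by (rule sum.cong[OF refl], rule sum.swap)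
    finally show ?thesis .
  qed
  have RRc: "RR a \<in> carrier_mat M M" if "a \<in> S" for a using P that msos_carrier by blast
  have PAc: "PA a \<in> carrier_mat dA dA" if "a \<in> S" for a using povm_psd[OF PA that] psd_carrier by blast
  have PBc: "PB a \<in> carrier_mat dB dB" if "a \<in> S" for a using povm_psd[OF PB that] psd_carrier by blast
  have "(\<Sum>c\<in>S. \<Sum>b\<in>S. \<Sum>a\<in>S. mtrace (kron (kron (RR a) (PA b)) (PB c) * \<rho>)) =
      (\<Sum>c\<in>S. \<Sum>b\<in>S. \<Sum>a\<in>S. \<Sum>r<?N. \<Sum>s<?N. RR a $$ (r div dB div dA, s div dB div dA) *
         (PA b $$ (r div dB mod dA, s div dB mod dA) * (PB c $$ (r mod dB, s mod dB) * \<rho> $$ (s, r))))"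
    by (intro sum.cong refl, subst mtrace_kron3[OF RRc PAc PBc rc]) (auto simp: mult.assoc)
  also have "\<dots> = (\<Sum>r<?N. \<Sum>s<?N. (\<Sum>a\<in>S. RR a $$ (r div dB div dA, s div dB div dA)) *
         (\<Sum>b\<in>S. PA b $$ (r div dB mod dA, s div dB mod dA)) * (\<Sum>c\<in>S. PB c $$ (r mod dB, s mod dB)) * \<rho> $$ (s, r))"
    by (rule sum_interchange5)
  also have "\<dots> = (\<Sum>r<?N. \<Sum>s<?N. (if r = s then 1 else 0) * \<rho> $$ (s, r))"
  proof (intro sum.cong refl)
    fix r s assume rs: "r \<in> {..<?N}" "s \<in> {..<?N}"
    have dB: "0 < dB" and dA: "0 < dA" using rs by (cases "dB = 0"; cases "dA = 0"; auto)+
    have q1: "r div dB < M*dA" "s div dB < M*dA" using rs by (auto simp: less_mult_imp_div_less)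
    have q2: "r div dB div dA < M" "s div dB div dA < M" using q1 by (auto simp: less_mult_imp_div_less)
    have q3: "r div dB mod dA < dA" "s div dB mod dA < dA" "r mod dB < dB" "s mod dB < dB" using dA dB by auto
    have "(\<Sum>a\<in>S. RR a $$ (r div dB div dA, s div dB div dA)) = (if r div dB div dA = s div dB div dA then 1 else 0)"
      using U q2 by blast
    moreover have "(\<Sum>b\<in>S. PA b $$ (r div dB mod dA, s div dB mod dA)) = (if r div dB mod dA = s div dB mod dA then 1 else 0)"
      using povm_entries[OF PA] q3 by blast
    moreover have "(\<Sum>c\<in>S. PB c $$ (r mod dB, s mod dB)) = (if r mod dB = s mod dB then 1 else 0)"
      using povm_entries[OF PB] q3 by blast
    moreover have "(r div dB div dA = s div dB div dA \<and> r div dB mod dA = s div dB mod dA \<and> r mod dB = s mod dB) \<longleftrightarrow> r = s"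
      using divmod_eq[of "r div dB" dA "s div dB"] divmod_eq[of r dB s] by blast
    ultimately show "(\<Sum>a\<in>S. RR a $$ (r div dB div dA, s div dB div dA)) *
         (\<Sum>b\<in>S. PA b $$ (r div dB mod dA, s div dB mod dA)) * (\<Sum>c\<in>S. PB c $$ (r mod dB, s mod dB)) * \<rho> $$ (s, r)
         = (if r = s then 1 else 0) * \<rho> $$ (s, r)" by auto
  qed
  also have "\<dots> = (\<Sum>r<?N. \<rho> $$ (r,r))"
  proof (rule sum.cong[OF refl])
    fix r assume r: "r \<in> {..<?N}"
    have "(\<Sum>s<?N. (if r = s then 1 else 0) * \<rho> $$ (s,r)) = (\<Sum>s<?N. if s = r then \<rho> $$ (s,r) else 0)"
      by (rule sum.cong) auto
    then show "(\<Sum>s<?N. (if r = s then 1 else 0) * \<rho> $$ (s,r)) = \<rho> $$ (r,r)" using r by (simp add: sum.delta)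
  qed
  also have "\<dots> = mtrace \<rho>" unfolding mtrace_def using rc by simp
  finally have e0: "(\<Sum>c\<in>S. \<Sum>b\<in>S. \<Sum>a\<in>S. mtrace (kron (kron (RR a) (PA b)) (PB c) * \<rho>)) = 1"
    using tr by simp
  have "(\<Sum>c\<in>S. \<Sum>b\<in>S. \<Sum>a\<in>S. T a b c) = Re (\<Sum>c\<in>S. \<Sum>b\<in>S. \<Sum>a\<in>S. mtrace (kron (kron (RR a) (PA b)) (PB c) * \<rho>))"
    unfolding T_def by (simp only: Re_sum)
  then have e: "(\<Sum>c\<in>S. \<Sum>b\<in>S. \<Sum>a\<in>S. T a b c) = 1" using e0 by simp
  have "(\<Sum>a\<in>S. T a a a) \<le> 1" using step1 swp e by simp
  then show ?thesis unfolding T_def .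
qed

definition inn :: "nat \<Rightarrow> (nat \<Rightarrow> complex) \<Rightarrow> (nat \<Rightarrow> complex) \<Rightarrow> complex" where
  "inn m u v = (\<Sum>i<m. cnj (u i) * v i)"

definition app :: "nat \<Rightarrow> complex mat \<Rightarrow> (nat \<Rightarrow> complex) \<Rightarrow> (nat \<Rightarrow> complex)" where
  "app m P v = (\<lambda>i. \<Sum>c<m. P $$ (i,c) * v c)"

definition nrm :: "nat \<Rightarrow> (nat \<Rightarrow> complex) \<Rightarrow> real" where
  "nrm m v = (\<Sum>i<m. (cmod (v i))^2)"

lemma cnj_mult_self: "cnj z * z = complex_of_real ((cmod z)^2)"
  using complex_norm_square[of z] by (simp add: mult.commute)

lemma inn_self: "inn m v v = complex_of_real (nrm m v)"
  unfolding inn_def nrm_def by (simp add: cnj_mult_self)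

lemma nrm_nonneg: "0 \<le> nrm m v" unfolding nrm_def by (simp add: sum_nonneg)

lemma nrm_zero: assumes "nrm m v = 0" "i < m" shows "v i = 0"
proof -
  have "\<forall>j\<in>{..<m}. (cmod (v j))^2 = 0" using assms(1) unfolding nrm_def
    by (subst sum_nonneg_eq_0_iff[symmetric]) auto
  then show ?thesis using assms(2) by auto
qed

lemma inn_cong: "(\<And>i. i < m \<Longrightarrow> u i = u' i) \<Longrightarrow> (\<And>i. i < m \<Longrightarrow> v i = v' i) \<Longrightarrow> inn m u v = inn m u' v'"
  unfolding inn_def by (rule sum.cong) auto

lemma nrm_cong: "(\<And>i. i < m \<Longrightarrow> u i = u' i) \<Longrightarrow> nrm m u = nrm m u'"
  unfolding nrm_def by (rule sum.cong) auto

lemma inn_swap: "inn m v u = cnj (inn m u v)"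
  unfolding inn_def by (simp add: mult.commute)

lemma inn_add_right: "inn m u (\<lambda>i. v i + w i) = inn m u v + inn m u w"
  unfolding inn_def by (simp add: algebra_simps sum.distrib)
lemma inn_add_left: "inn m (\<lambda>i. u i + v i) w = inn m u w + inn m v w"
  unfolding inn_def by (simp add: algebra_simps sum.distrib)
lemma inn_scale_right: "inn m u (\<lambda>i. c * v i) = c * inn m u v"
  unfolding inn_def by (simp add: algebra_simps sum_distrib_left)
lemma inn_scale_left: "inn m (\<lambda>i. c * u i) v = cnj c * inn m u v"
  unfolding inn_def by (simp add: algebra_simps sum_distrib_left)

lemma nrm_inn: "nrm m v = Re (inn m v v)" by (simp add: inn_self)

lemma nrm_add: "nrm m (\<lambda>i. u i + v i) = nrm m u + nrm m v + 2 * Re (inn m u v)"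
proof -
  have "inn m (\<lambda>i. u i + v i) (\<lambda>i. u i + v i) = inn m u u + inn m v v + (inn m u v + inn m v u)"
    by (simp add: inn_add_left inn_add_right)
  moreover have "Re (inn m u v + inn m v u) = 2 * Re (inn m u v)" by (simp add: inn_swap[of m v u])
  ultimately show ?thesis unfolding nrm_inn by simp
qed

lemma nrm_scale: "nrm m (\<lambda>i. c * v i) = (cmod c)^2 * nrm m v"
  unfolding nrm_def by (simp add: norm_mult power_mult_distrib sum_distrib_left)

lemma qf_app: "qf m (\<lambda>r c. P $$ (r,c)) v = inn m v (app m P v)"
  unfolding qf_def inn_def app_def by (simp add: sum_distrib_left mult.assoc)

lemma qf_scale: "qf d N (\<lambda>i. c * w i) = complex_of_real ((cmod c)^2) * qf d N w"
proof -
  have h: "complex_of_real ((cmod c)^2) = cnj c * c" by (simp add: cnj_mult_self)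
  show ?thesis unfolding h qf_def by (simp add: sum_distrib_left algebra_simps)
qed

lemma app_add: "app m P (\<lambda>i. u i + v i) = (\<lambda>i. app m P u i + app m P v i)"
  unfolding app_def by (simp add: algebra_simps sum.distrib)
lemma app_scale: "app m P (\<lambda>i. c * u i) = (\<lambda>i. c * app m P u i)"
  unfolding app_def by (simp add: algebra_simps sum_distrib_left)

lemma orth_proj_herm: assumes "orth_proj m P" "r < m" "c < m" shows "P $$ (r,c) = cnj (P $$ (c,r))"
proof -
  have P: "P \<in> carrier_mat m m" and A: "adj P = P" using assms unfolding orth_proj_def by auto
  have "P $$ (r,c) = adj P $$ (r,c)" using A by simp
  also have "\<dots> = cnj (P $$ (c,r))" using P assms unfolding adj_def by auto
  finally show ?thesis .
qed

lemma orth_proj_idem: assumes "orth_proj m P" "i < m" "j < m" shows "(\<Sum>k<m. P $$ (i,k) * P $$ (k,j)) = P $$ (i,j)"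
proof -
  have P: "P \<in> carrier_mat m m" and A: "P * P = P" using assms unfolding orth_proj_def by auto
  have "(P * P) $$ (i,j) = P $$ (i,j)" using A by simp
  then show ?thesis using P assms by (simp add: scalar_prod_def atLeast0LessThan)
qed

lemma proj_adj: assumes "orth_proj m P" shows "inn m (app m P u) v = inn m u (app m P v)"
proof -
  have "inn m (app m P u) v = (\<Sum>i<m. \<Sum>c<m. cnj (P $$ (i,c)) * cnj (u c) * v i)"
    unfolding inn_def app_def by (simp add: sum_distrib_left sum_distrib_right algebra_simps)
  also have "\<dots> = (\<Sum>i<m. \<Sum>c<m. P $$ (c,i) * cnj (u c) * v i)"
  proof (intro sum.cong refl)
    fix i c assume "i \<in> {..<m}" "c \<in> {..<m}"
    then have "P $$ (c,i) = cnj (P $$ (i,c))" using orth_proj_herm[OF assms] by blast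
    then show "cnj (P $$ (i,c)) * cnj (u c) * v i = P $$ (c,i) * cnj (u c) * v i" by simp
  qed
  also have "\<dots> = (\<Sum>c<m. \<Sum>i<m. P $$ (c,i) * cnj (u c) * v i)" by (rule sum.swap)
  also have "\<dots> = inn m u (app m P v)"
    unfolding inn_def app_def by (simp add: sum_distrib_left algebra_simps)
  finally show ?thesis .
qed

lemma proj_idem_app: assumes "orth_proj m P" "i < m" shows "app m P (app m P v) i = app m P v i"
proof -
  have "app m P (app m P v) i = (\<Sum>c<m. \<Sum>k<m. P $$ (i,c) * P $$ (c,k) * v k)"
    unfolding app_def by (simp add: sum_distrib_left mult.assoc)
  also have "\<dots> = (\<Sum>k<m. \<Sum>c<m. P $$ (i,c) * P $$ (c,k) * v k)" by (rule sum.swap)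
  also have "\<dots> = (\<Sum>k<m. P $$ (i,k) * v k)"
  proof (rule sum.cong[OF refl])
    fix k assume "k \<in> {..<m}"
    then have "(\<Sum>c<m. P $$ (i,c) * P $$ (c,k)) = P $$ (i,k)" using orth_proj_idem[OF assms(1,2)] by auto
    then show "(\<Sum>c<m. P $$ (i,c) * P $$ (c,k) * v k) = P $$ (i,k) * v k"
      by (simp add: sum_distrib_right[symmetric])
  qed
  finally show ?thesis unfolding app_def by simp
qed

lemma proj_qf: assumes "orth_proj m P" shows "qf m (\<lambda>r c. P $$ (r,c)) v = complex_of_real (nrm m (app m P v))"
proof -
  have "qf m (\<lambda>r c. P $$ (r,c)) v = inn m v (app m P v)" by (rule qf_app)
  also have "\<dots> = inn m v (app m P (app m P v))"
    by (rule inn_cong) (auto simp: proj_idem_app[OF assms])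
  also have "\<dots> = inn m (app m P v) (app m P v)" by (rule proj_adj[OF assms, symmetric])
  finally show ?thesis by (simp add: inn_self)
qed

lemma proj_inn_self: assumes "orth_proj m P" shows "inn m v (app m P v) = complex_of_real (nrm m (app m P v))"
  using proj_qf[OF assms] qf_app by metis

lemma proj_contract: assumes "orth_proj m P" shows "nrm m (app m P v) \<le> nrm m v"
proof -
  define w where "w = (\<lambda>i. v i - app m P v i)"
  have "nrm m v = nrm m (\<lambda>i. app m P v i + w i)" unfolding w_def by simp
  also have "\<dots> = nrm m (app m P v) + nrm m w + 2 * Re (inn m (app m P v) w)" by (rule nrm_add)
  also have "inn m (app m P v) w = 0"
  proof -
    have "inn m (app m P v) w = inn m (app m P v) v - inn m (app m P v) (app m P v)"
      unfolding w_def inn_def by (simp add: sum_subtractf algebra_simps)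
    also have "\<dots> = inn m v (app m P v) - inn m (app m P v) (app m P v)"
      by (simp add: proj_adj[OF assms])
    also have "\<dots> = 0" using proj_inn_self[OF assms, of v] by (simp add: inn_self)
    finally show ?thesis .
  qed
  finally show ?thesis using nrm_nonneg[of m w] by simp
qed

lemma cs_unit: assumes "nrm m q = 1" shows "(cmod (inn m q y))\<^sup>2 \<le> nrm m y"
proof -
  define a where "a = inn m q y"
  have i1: "inn m y (\<lambda>i. (- a) * q i) = - a * cnj a"
    unfolding inn_scale_right a_def by (simp add: inn_swap[of m y q])
  have i2: "Re (- a * cnj a) = - (cmod a)\<^sup>2"
    using complex_norm_square[of a] by (metis Re_complex_of_real minus_mult_left uminus_complex.sel(1))
  have "0 \<le> nrm m (\<lambda>i. y i + (- a) * q i)" by (rule nrm_nonneg)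
  also have "\<dots> = nrm m y + (cmod a)\<^sup>2 + 2 * Re (inn m y (\<lambda>i. (- a) * q i))"
    using nrm_add[of m y "\<lambda>i. (- a) * q i"] nrm_scale[of m "- a" q] assms by simp
  finally have "0 \<le> nrm m y + (cmod a)\<^sup>2 + 2 * Re (inn m y (\<lambda>i. (- a) * q i))" .
  then have "0 \<le> nrm m y + (cmod a)\<^sup>2 + 2 * (- (cmod a)\<^sup>2)" by (simp only: i1 i2)
  then show ?thesis unfolding a_def by simp
qed

lemma mult_entry: "A \<in> carrier_mat n n \<Longrightarrow> B \<in> carrier_mat n n \<Longrightarrow> i < n \<Longrightarrow> j < n \<Longrightarrow>
  (A * B) $$ (i,j) = (\<Sum>k<n. A $$ (i,k) * B $$ (k,j))"
  by (simp add: scalar_prod_def atLeast0LessThan)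

lemma orth_proj_psd: assumes "orth_proj m P" shows "psd m P"
proof -
  have P: "P \<in> carrier_mat m m" and A: "adj P = P" using assms unfolding orth_proj_def by auto
  have "0 \<le> Re (cinner v (P *\<^sub>v v))" if v: "v \<in> carrier_vec m" for v
  proof -
    have vw: "v = vec m (\<lambda>i. v $ i)" using v by auto
    have "cinner v (P *\<^sub>v v) = qf m (\<lambda>r c. P $$ (r,c)) (\<lambda>i. v $ i)"
      using cinner_mult[OF P, of "\<lambda>i. v $ i"] vw by simp
    also have "\<dots> = complex_of_real (nrm m (app m P (\<lambda>i. v $ i)))" by (rule proj_qf[OF assms])
    finally show ?thesis using nrm_nonneg by simp
  qed
  then show ?thesis unfolding psd_def using P A by blast
qed

lemma psd_unique_proj:
  assumes P: "orth_proj m P" and S: "psd m S" and SS: "S * S = P"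
  shows "S = P"
proof -
  have Pc: "P \<in> carrier_mat m m" using P unfolding orth_proj_def by auto
  have Sc: "S \<in> carrier_mat m m" using psd_carrier[OF S] .
  have Sf: "psdf m (\<lambda>r c. S $$ (r,c))" using psd_psdf[OF S] .
  have Pf: "psdf m (\<lambda>r c. P $$ (r,c))" using psd_psdf[OF orth_proj_psd[OF P]] .
  have Sh: "S $$ (r,c) = cnj (S $$ (c,r))" if "r < m" "c < m" for r c using Sf that unfolding psdf_def by blast
  have ss: "(\<Sum>k<m. S $$ (i,k) * S $$ (k,j)) = P $$ (i,j)" if "i < m" "j < m" for i j
    using mult_entry[OF Sc Sc that] SS by simp
  have pp: "(\<Sum>k<m. P $$ (i,k) * P $$ (k,j)) = P $$ (i,j)" if "i < m" "j < m" for i j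
    using orth_proj_idem[OF P that] .
  have SPm: "S * P = P * S"
  proof -
    have "S * P = S * (S * S)" using SS by simp
    also have "\<dots> = S * S * S" using assoc_mult_mat[OF Sc Sc Sc] by simp
    finally show ?thesis using SS by simp
  qed
  have sp: "(\<Sum>k<m. S $$ (i,k) * P $$ (k,j)) = (\<Sum>k<m. P $$ (i,k) * S $$ (k,j))" if "i < m" "j < m" for i j
    using mult_entry[OF Sc Pc that] mult_entry[OF Pc Sc that] SPm by simp
  show ?thesis
  proof (rule eq_matI)
    show "dim_row S = dim_row P" "dim_col S = dim_col P" using Sc Pc by auto
    fix r0 c assume "r0 < dim_row P" "c < dim_col P"
    then have r0: "r0 < m" and c: "c < m" using Pc by auto
    define x where "x = (\<lambda>r. P $$ (r,c) - S $$ (r,c))"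
    define ps where "ps = (\<lambda>r. \<Sum>k<m. P $$ (r,k) * S $$ (k,c))"
    have Z: "(\<Sum>s<m. (P $$ (r,s) + S $$ (r,s)) * x s) = 0" if r: "r < m" for r
    proof -
      have "(\<Sum>s<m. (P $$ (r,s) + S $$ (r,s)) * x s) =
        (\<Sum>s<m. P $$ (r,s) * P $$ (s,c)) - (\<Sum>s<m. P $$ (r,s) * S $$ (s,c))
        + (\<Sum>s<m. S $$ (r,s) * P $$ (s,c)) - (\<Sum>s<m. S $$ (r,s) * S $$ (s,c))"
        unfolding x_def by (simp add: algebra_simps sum.distrib sum_subtractf)
      also have "\<dots> = 0" using pp[OF r c] ss[OF r c] sp[OF r c] by simp
      finally show ?thesis .
    qed
    have "qf m (\<lambda>r c. P $$ (r,c)) x + qf m (\<lambda>r c. S $$ (r,c)) x = (\<Sum>r<m. cnj (x r) * (\<Sum>s<m. (P $$ (r,s) + S $$ (r,s)) * x s))"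
      unfolding qf_def by (simp add: sum.distrib[symmetric] sum_distrib_left algebra_simps)
    also have "\<dots> = 0" using Z by simp
    finally have q0: "Re (qf m (\<lambda>r c. P $$ (r,c)) x) + Re (qf m (\<lambda>r c. S $$ (r,c)) x) = 0"
      by (metis plus_complex.sel(1) zero_complex.sel(1))
    have "0 \<le> Re (qf m (\<lambda>r c. S $$ (r,c)) x)" "0 \<le> Re (qf m (\<lambda>r c. P $$ (r,c)) x)"
      using Sf Pf unfolding psdf_def by blast+
    then have "Re (qf m (\<lambda>r c. P $$ (r,c)) x) = 0" using q0 by linarith
    then have "nrm m (app m P x) = 0" using proj_qf[OF P, of x] by simp
    then have Px: "app m P x r = 0" if "r < m" for r using nrm_zero that by blast
    have psr: "ps r = P $$ (r,c)" if r: "r < m" for r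
    proof -
      have "app m P x r = (\<Sum>s<m. P $$ (r,s) * P $$ (s,c)) - ps r"
        unfolding app_def x_def ps_def by (simp add: algebra_simps sum_subtractf)
      then show ?thesis using Px[OF r] pp[OF r c] by simp
    qed
    have spr: "(\<Sum>s<m. S $$ (r,s) * P $$ (s,c)) = P $$ (r,c)" if r: "r < m" for r
      using sp[OF r c] psr[OF r] unfolding ps_def by simp
    have "complex_of_real (nrm m x) = (\<Sum>k<m. cnj (x k) * x k)" using inn_self[of m x] unfolding inn_def by simp
    also have "\<dots> = (\<Sum>k<m. (P $$ (c,k) - S $$ (c,k)) * x k)"
    proof (rule sum.cong[OF refl])
      fix k assume "k \<in> {..<m}"
      then have k: "k < m" by simp
      have "cnj (x k) = P $$ (c,k) - S $$ (c,k)"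
        unfolding x_def using orth_proj_herm[OF P c k] Sh[OF c k] by simp
      then show "cnj (x k) * x k = (P $$ (c,k) - S $$ (c,k)) * x k" by simp
    qed
    also have "\<dots> = (\<Sum>k<m. P $$ (c,k) * P $$ (k,c)) - ps c - (\<Sum>k<m. S $$ (c,k) * P $$ (k,c)) + (\<Sum>k<m. S $$ (c,k) * S $$ (k,c))"
      unfolding x_def ps_def by (simp add: algebra_simps sum.distrib sum_subtractf)
    also have "\<dots> = 0" using pp[OF c c] psr[OF c] spr[OF c] ss[OF c c] by simp
    finally have "nrm m x = 0" by simp
    then have "x r0 = 0" using nrm_zero r0 by blast
    then show "S $$ (r0,c) = P $$ (r0,c)" unfolding x_def by simp
  qed
qed

lemma msqrt_proj: assumes "orth_proj m P" shows "msqrt P = P"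
proof -
  have Pc: "P \<in> carrier_mat m m" and PP: "P * P = P" using assms unfolding orth_proj_def by auto
  have dr: "dim_row P = m" using Pc by auto
  show ?thesis unfolding msqrt_def dr
  proof (rule the_equality)
    show "psd m P \<and> P * P = P" using orth_proj_psd[OF assms] PP by simp
    fix S assume "psd m S \<and> S * S = P"
    then show "S = P" using psd_unique_proj[OF assms] by blast
  qed
qed

lemma app_cong: "(\<And>j. j < m \<Longrightarrow> f j = g j) \<Longrightarrow> app m P f i = app m P g i"
  unfolding app_def by (rule sum.cong) auto

lemma mult_vec_app: assumes "P \<in> carrier_mat m m" "u \<in> carrier_vec m" "i < m"
  shows "(P *\<^sub>v u) $ i = app m P (\<lambda>j. u $ j) i"
  using assms unfolding app_def by (simp add: scalar_prod_def atLeast0LessThan)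

lemma vnorm_nrm: assumes "u \<in> carrier_vec m" shows "vnorm u = sqrt (nrm m (\<lambda>j. u $ j))"
  using assms unfolding vnorm_def nrm_def by simp

lemma vnorm_PQ: assumes P: "P \<in> carrier_mat m m" and Q: "Q \<in> carrier_mat m m" and v: "v \<in> carrier_vec m"
  shows "vnorm ((P * Q) *\<^sub>v v) = sqrt (nrm m (app m P (app m Q (\<lambda>j. v $ j))))"
proof -
  have Qv: "Q *\<^sub>v v \<in> carrier_vec m" using Q v by auto
  have e: "(P * Q) *\<^sub>v v = P *\<^sub>v (Q *\<^sub>v v)" using P Q v by simp
  have c: "(P * Q) *\<^sub>v v \<in> carrier_vec m" using P Q v by auto
  have "nrm m (\<lambda>j. ((P * Q) *\<^sub>v v) $ j) = nrm m (app m P (app m Q (\<lambda>j. v $ j)))"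
  proof (rule nrm_cong)
    fix i assume i: "i < m"
    have "((P * Q) *\<^sub>v v) $ i = app m P (\<lambda>j. (Q *\<^sub>v v) $ j) i" unfolding e using mult_vec_app[OF P Qv i] .
    also have "\<dots> = app m P (app m Q (\<lambda>j. v $ j)) i"
      by (rule app_cong) (use mult_vec_app[OF Q v] in auto)
    finally show "((P * Q) *\<^sub>v v) $ i = app m P (app m Q (\<lambda>j. v $ j)) i" .
  qed
  then show ?thesis using vnorm_nrm[OF c] by simp
qed

lemma opn:
  assumes P: "orth_proj m P" and Q: "orth_proj m Q" and m: "0 < m"
  shows "0 \<le> op_norm (P * Q)" "op_norm (P * Q) \<le> 1"
    "t < op_norm (P * Q) \<Longrightarrow> \<exists>w. nrm m w = 1 \<and> t < sqrt (nrm m (app m P (app m Q w)))"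
proof -
  have Pc: "P \<in> carrier_mat m m" and Qc: "Q \<in> carrier_mat m m" using P Q unfolding orth_proj_def by auto
  have dc: "dim_col (P * Q) = m" using Qc by auto
  define X where "X = {vnorm ((P * Q) *\<^sub>v v) | v. v \<in> carrier_vec (dim_col (P * Q)) \<and> vnorm v = 1}"
  have opX: "op_norm (P * Q) = Sup X" unfolding op_norm_def X_def ..
  have mem: "x \<in> X \<longleftrightarrow> (\<exists>v. v \<in> carrier_vec m \<and> nrm m (\<lambda>j. v $ j) = 1 \<and> x = sqrt (nrm m (app m P (app m Q (\<lambda>j. v $ j)))))" for x
  proof -
    have vn: "vnorm v = 1 \<longleftrightarrow> nrm m (\<lambda>j. v $ j) = 1" if "v \<in> carrier_vec m" for v
      using vnorm_nrm[OF that] nrm_nonneg by auto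
    show ?thesis
    proof
      assume "x \<in> X"
      then obtain v where v: "x = vnorm ((P * Q) *\<^sub>v v)" "v \<in> carrier_vec m" "vnorm v = 1"
        unfolding X_def dc by blast
      then show "\<exists>v. v \<in> carrier_vec m \<and> nrm m (\<lambda>j. v $ j) = 1 \<and> x = sqrt (nrm m (app m P (app m Q (\<lambda>j. v $ j))))"
        using vn vnorm_PQ[OF Pc Qc] by blast
    next
      assume "\<exists>v. v \<in> carrier_vec m \<and> nrm m (\<lambda>j. v $ j) = 1 \<and> x = sqrt (nrm m (app m P (app m Q (\<lambda>j. v $ j))))"
      then obtain v where v: "v \<in> carrier_vec m" "nrm m (\<lambda>j. v $ j) = 1" "x = sqrt (nrm m (app m P (app m Q (\<lambda>j. v $ j))))"
        by blast
      have "x = vnorm ((P * Q) *\<^sub>v v)" "vnorm v = 1" using v vn vnorm_PQ[OF Pc Qc] by auto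
      then show "x \<in> X" unfolding X_def dc using v by blast
    qed
  qed
  have le1: "x \<le> 1" if xX: "x \<in> X" for x
  proof -
    obtain v where v: "v \<in> carrier_vec m" "nrm m (\<lambda>j. v $ j) = 1" "x = sqrt (nrm m (app m P (app m Q (\<lambda>j. v $ j))))"
      using mem[THEN iffD1, OF xX] by blast
    have "nrm m (app m P (app m Q (\<lambda>j. v $ j))) \<le> nrm m (app m Q (\<lambda>j. v $ j))" by (rule proj_contract[OF P])
    also have "\<dots> \<le> 1" using proj_contract[OF Q, of "\<lambda>j. v $ j"] v by simp
    finally show ?thesis using v by simp
  qed
  have ge0: "0 \<le> x" if "x \<in> X" for x using mem[THEN iffD1, OF that] nrm_nonneg by auto
  define v0 where "v0 = vec m (\<lambda>i. if i = 0 then 1 else (0::complex))"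
  have "nrm m (\<lambda>j. v0 $ j) = 1"
  proof -
    have "nrm m (\<lambda>j. v0 $ j) = (\<Sum>i<m. if i = 0 then 1 else 0)"
      unfolding nrm_def v0_def by (rule sum.cong) auto
    also have "\<dots> = 1" using m by (simp add: sum.delta)
    finally show ?thesis .
  qed
  then have ne: "sqrt (nrm m (app m P (app m Q (\<lambda>j. v0 $ j)))) \<in> X"
    by (intro mem[THEN iffD2] exI[of _ v0]) (simp add: v0_def)
  then have Xne: "X \<noteq> {}" by auto
  have bdd: "bdd_above X" unfolding bdd_above_def using le1 by blast
  show "0 \<le> op_norm (P * Q)" unfolding opX using cSup_upper[OF ne bdd] ge0[OF ne] by linarith
  show "op_norm (P * Q) \<le> 1" unfolding opX using cSup_least[OF Xne] le1 by blast
  assume "t < op_norm (P * Q)"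
  then obtain x where "x \<in> X" "t < x" unfolding opX using less_cSup_iff[OF Xne bdd] by blast
  then show "\<exists>w. nrm m w = 1 \<and> t < sqrt (nrm m (app m P (app m Q w)))" using mem[THEN iffD1] by blast
qed

lemma nrm_scale_real: "nrm m (\<lambda>i. complex_of_real a * v i) = a^2 * nrm m v"
  using nrm_scale[of m "complex_of_real a" v] by simp

lemma construct_psi:
  assumes P: "orth_proj m P" and Q: "orth_proj m Q" and w: "nrm m w = 1" and t0: "0 \<le> t"
    and tl: "t < sqrt (nrm m (app m P (app m Q w)))"
  shows "\<exists>\<psi>. nrm m \<psi> = 1 \<and> 1 + t \<le> Re (qf m (\<lambda>r c. P $$ (r,c)) \<psi>) + Re (qf m (\<lambda>r c. Q $$ (r,c)) \<psi>)"
proof -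
  define u where "u = app m Q w"
  define nu where "nu = nrm m u"
  define \<mu> where "\<mu> = nrm m (app m P u)"
  have nu1: "nu \<le> 1" unfolding nu_def u_def using proj_contract[OF Q, of w] w by simp
  have mu_nu: "\<mu> \<le> nu" unfolding \<mu>_def nu_def by (rule proj_contract[OF P])
  have tmu: "t < sqrt \<mu>" using tl unfolding \<mu>_def u_def .
  have mu0: "0 < \<mu>"
  proof (rule ccontr)
    assume "\<not> 0 < \<mu>"
    then have "\<mu> = 0" using nrm_nonneg[of m "app m P u"] unfolding \<mu>_def by linarith
    then show False using tmu t0 by simp
  qed
  have nu0: "0 < nu" using mu0 mu_nu by linarith
  define \<alpha> where "\<alpha> = 1 / sqrt nu"
  define q where "q = (\<lambda>i. complex_of_real \<alpha> * u i)"
  have nq: "nrm m q = 1" unfolding q_def nrm_scale_real \<alpha>_def nu_def[symmetric] using nu0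
    by (simp add: power_divide)
  have Qq: "app m Q q i = q i" if "i < m" for i
    unfolding q_def app_scale u_def using proj_idem_app[OF Q that] by simp
  define x where "x = app m P q"
  have x_eq: "x = (\<lambda>i. complex_of_real \<alpha> * app m P u i)" unfolding x_def q_def app_scale ..
  define \<tau> where "\<tau> = sqrt (nrm m x)"
  have nx: "nrm m x = \<alpha>^2 * \<mu>" unfolding x_eq nrm_scale_real \<mu>_def ..
  have "\<mu> \<le> \<alpha>^2 * \<mu>"
  proof -
    have "\<alpha>^2 = 1 / nu" unfolding \<alpha>_def using nu0 by (simp add: power_divide)
    moreover have "1 \<le> 1 / nu" using nu0 nu1 by simp
    ultimately show ?thesis using mult_left_mono[of 1 "1/nu" \<mu>] mu0 by simp
  qed
  then have "sqrt \<mu> \<le> \<tau>" unfolding \<tau>_def nx by simp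
  then have tt: "t < \<tau>" using tmu by linarith
  have tpos: "0 < \<tau>" using tt t0 by linarith
  have tsq: "\<tau>^2 = nrm m x" unfolding \<tau>_def using nrm_nonneg by simp
  have iqx: "inn m q x = complex_of_real (\<tau>^2)" unfolding x_def tsq using proj_inn_self[OF P, of q] x_def by simp
  define \<beta> where "\<beta> = 1 / \<tau>"
  define \<psi>0 where "\<psi>0 = (\<lambda>i. q i + complex_of_real \<beta> * x i)"
  have n0: "nrm m \<psi>0 = 2 + 2 * \<tau>"
  proof -
    have "nrm m \<psi>0 = nrm m q + nrm m (\<lambda>i. complex_of_real \<beta> * x i) + 2 * Re (inn m q (\<lambda>i. complex_of_real \<beta> * x i))"
      unfolding \<psi>0_def by (rule nrm_add)
    also have "\<dots> = 1 + \<beta>^2 * \<tau>^2 + 2 * (\<beta> * \<tau>^2)"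
      unfolding nrm_scale_real inn_scale_right iqx nq tsq by simp
    also have "\<dots> = 2 + 2 * \<tau>" unfolding \<beta>_def using tpos by (simp add: power2_eq_square field_simps)
    finally show ?thesis .
  qed
  have qP: "Re (qf m (\<lambda>r c. P $$ (r,c)) \<psi>0) = (1 + \<tau>)^2"
  proof -
    have "nrm m (app m P \<psi>0) = nrm m (\<lambda>i. complex_of_real (1 + \<beta>) * x i)"
    proof (rule nrm_cong)
      fix i assume i: "i < m"
      have "app m P \<psi>0 i = app m P q i + complex_of_real \<beta> * app m P x i"
        unfolding \<psi>0_def app_add app_scale by simp
      also have "app m P x i = x i" unfolding x_def using proj_idem_app[OF P i] .
      finally show "app m P \<psi>0 i = complex_of_real (1 + \<beta>) * x i" unfolding x_def by (simp add: algebra_simps)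
    qed
    also have "\<dots> = (1 + \<beta>)^2 * \<tau>^2" unfolding nrm_scale_real tsq ..
    also have "\<dots> = (1 + \<tau>)^2" unfolding \<beta>_def using tpos by (simp add: power2_eq_square field_simps)
    finally show ?thesis using proj_qf[OF P, of \<psi>0] by simp
  qed
  have qQ: "(1 + \<tau>)^2 \<le> Re (qf m (\<lambda>r c. Q $$ (r,c)) \<psi>0)"
  proof -
    have "inn m q (app m Q \<psi>0) = inn m (app m Q q) \<psi>0" by (rule proj_adj[OF Q, symmetric])
    also have "\<dots> = inn m q \<psi>0" by (rule inn_cong) (auto simp: Qq)
    also have "\<dots> = inn m q q + complex_of_real \<beta> * inn m q x"
      unfolding \<psi>0_def inn_add_right inn_scale_right ..
    also have "\<dots> = complex_of_real (1 + \<tau>)"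
      unfolding inn_self nq iqx \<beta>_def using tpos by (simp add: power2_eq_square)
    finally have ie: "inn m q (app m Q \<psi>0) = complex_of_real (1 + \<tau>)" .
    have c: "cmod (complex_of_real (1 + \<tau>)) = 1 + \<tau>" using tpos by (simp only: norm_of_real)
    have "(1 + \<tau>)^2 \<le> nrm m (app m Q \<psi>0)" using cs_unit[OF nq, of "app m Q \<psi>0"] unfolding ie c .
    then show ?thesis using proj_qf[OF Q, of \<psi>0] by simp
  qed
  define \<gamma> where "\<gamma> = 1 / sqrt (2 + 2 * \<tau>)"
  define \<psi> where "\<psi> = (\<lambda>i. complex_of_real \<gamma> * \<psi>0 i)"
  have g2: "\<gamma>^2 = 1 / (2 + 2 * \<tau>)" unfolding \<gamma>_def using tpos by (simp add: power_divide)
  have "nrm m \<psi> = 1" unfolding \<psi>_def nrm_scale_real n0 g2 using tpos by simp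
  moreover have "1 + t \<le> Re (qf m (\<lambda>r c. P $$ (r,c)) \<psi>) + Re (qf m (\<lambda>r c. Q $$ (r,c)) \<psi>)"
  proof -
    have e: "Re (qf m N \<psi>) = \<gamma>^2 * Re (qf m N \<psi>0)" for N
      unfolding \<psi>_def qf_scale by simp
    have "1 + \<tau> = \<gamma>^2 * ((1 + \<tau>)^2 + (1 + \<tau>)^2)" unfolding g2 using tpos by (simp add: power2_eq_square field_simps)
    also have "\<dots> \<le> \<gamma>^2 * ((1 + \<tau>)^2 + Re (qf m (\<lambda>r c. Q $$ (r,c)) \<psi>0))"
      using qQ by (intro mult_left_mono) auto
    also have "\<dots> = Re (qf m (\<lambda>r c. P $$ (r,c)) \<psi>) + Re (qf m (\<lambda>r c. Q $$ (r,c)) \<psi>)"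
      unfolding e qP by (simp add: algebra_simps)
    finally show ?thesis using tt by linarith
  qed
  ultimately show ?thesis by blast
qed

lemma construct_psi0:
  assumes P: "orth_proj m P" and Q: "orth_proj m Q" and i: "i < m" and j: "j < m" and nz: "P $$ (i,j) \<noteq> 0"
  shows "\<exists>\<psi>. nrm m \<psi> = 1 \<and> 1 \<le> Re (qf m (\<lambda>r c. P $$ (r,c)) \<psi>) + Re (qf m (\<lambda>r c. Q $$ (r,c)) \<psi>)"
proof -
  define e where "e = (\<lambda>k. if k = j then 1 else (0::complex))"
  define x where "x = app m P e"
  have xk: "x k = P $$ (k,j)" for k
  proof -
    have "x k = (\<Sum>c<m. if c = j then P $$ (k,c) else 0)" unfolding x_def app_def e_def by (rule sum.cong) auto
    then show ?thesis using j by (simp add: sum.delta)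
  qed
  have nx: "0 < nrm m x"
  proof (rule ccontr)
    assume "\<not> 0 < nrm m x"
    then have "nrm m x = 0" using nrm_nonneg[of m x] by linarith
    then have "x i = 0" using nrm_zero i by blast
    then show False using nz xk by simp
  qed
  define \<alpha> where "\<alpha> = 1 / sqrt (nrm m x)"
  define \<psi> where "\<psi> = (\<lambda>k. complex_of_real \<alpha> * x k)"
  have n1: "nrm m \<psi> = 1" unfolding \<psi>_def nrm_scale_real \<alpha>_def using nx by (simp add: power_divide)
  have "nrm m (app m P \<psi>) = nrm m \<psi>"
  proof (rule nrm_cong)
    fix k assume k: "k < m"
    show "app m P \<psi> k = \<psi> k" unfolding \<psi>_def app_scale x_def using proj_idem_app[OF P k] by simp
  qed
  then have "Re (qf m (\<lambda>r c. P $$ (r,c)) \<psi>) = 1" using proj_qf[OF P, of \<psi>] n1 by simp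
  moreover have "0 \<le> Re (qf m (\<lambda>r c. Q $$ (r,c)) \<psi>)" using proj_qf[OF Q, of \<psi>] nrm_nonneg by simp
  ultimately show ?thesis using n1 by (intro exI[of _ \<psi>]) auto
qed

primrec sig :: "complex mat \<Rightarrow> nat \<Rightarrow> complex mat" where
  "sig \<sigma> 0 = 1\<^sub>m 1"
| "sig \<sigma> (Suc k) = kron \<sigma> (sig \<sigma> k)"

definition outer :: "nat \<Rightarrow> (nat \<Rightarrow> complex) \<Rightarrow> complex mat" where
  "outer m \<psi> = mat m m (\<lambda>(i,j). \<psi> i * cnj (\<psi> j))"

lemma outer_msos: "msos m (outer m \<psi>)"
  unfolding msos_def sosf_def outer_def by (intro conjI exI[of _ 1] exI[of _ "\<lambda>i. \<psi>"]) auto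

lemma outer_trace: "mtrace (outer m \<psi>) = complex_of_real (nrm m \<psi>)"
proof -
  have "complex_of_real (nrm m \<psi>) = (\<Sum>i<m. complex_of_real ((cmod (\<psi> i))^2))" unfolding nrm_def by (rule of_real_sum)
  also have "\<dots> = (\<Sum>i<m. \<psi> i * cnj (\<psi> i))" by (simp only: complex_norm_square)
  also have "\<dots> = mtrace (outer m \<psi>)" unfolding mtrace_def outer_def by simp
  finally show ?thesis by simp
qed

lemma sig_msos: "msos m \<sigma> \<Longrightarrow> msos (m^k) (sig \<sigma> k)"
proof (induction k)
  case 0 then show ?case using msos_one by simp
next
  case (Suc k) then show ?case using msos_kron[of m \<sigma> "m^k" "sig \<sigma> k"] by simp
qed

lemma sig_trace: "msos m \<sigma> \<Longrightarrow> mtrace \<sigma> = 1 \<Longrightarrow> mtrace (sig \<sigma> k) = 1"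
proof (induction k)
  case 0 then show ?case by (simp add: mtrace_def)
next
  case (Suc k)
  have "sig \<sigma> k \<in> carrier_mat (m^k) (m^k)" using sig_msos[OF Suc.prems(1)] msos_carrier by blast
  moreover have "\<sigma> \<in> carrier_mat m m" using Suc.prems(1) msos_carrier by blast
  ultimately show ?case using Suc by (simp add: mtrace_kron)
qed

lemma trace_outer: assumes "M \<in> carrier_mat m m" shows "mtrace (M * outer m \<psi>) = qf m (\<lambda>r c. M $$ (r,c)) \<psi>"
proof -
  have oc: "outer m \<psi> \<in> carrier_mat m m" unfolding outer_def by simp
  show ?thesis unfolding mtrace_mult[OF assms oc] qf_def
    by (intro sum.cong refl) (simp add: outer_def algebra_simps)
qed

lemma rep_R_carrier: "(\<forall>x\<in>set xs. R (f x) x \<in> carrier_mat m m) \<Longrightarrow> rep_R R (map f xs) xs \<in> carrier_mat (m^length xs) (m^length xs)"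
  by (induction xs) (auto intro: kron_carrier)

lemma rep_trace: assumes "\<forall>x\<in>set xs. R (f x) x \<in> carrier_mat m m" and S: "\<sigma> \<in> carrier_mat m m" and "msos m \<sigma>"
  shows "mtrace (rep_R R (map f xs) xs * sig \<sigma> (length xs)) = prod_list (map (\<lambda>x. mtrace (R (f x) x * \<sigma>)) xs)"
  using assms(1)
proof (induction xs)
  case Nil then show ?case by (simp add: mtrace_def)
next
  case (Cons x xs)
  have c1: "rep_R R (map f xs) xs \<in> carrier_mat (m^length xs) (m^length xs)" using rep_R_carrier Cons.prems by auto
  have c2: "sig \<sigma> (length xs) \<in> carrier_mat (m^length xs) (m^length xs)" using sig_msos[OF assms(3)] msos_carrier by blast
  have c3: "R (f x) x \<in> carrier_mat m m" using Cons.prems by auto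
  show ?case using Cons mtrace_kron_mult[OF c3 c1 S c2] by simp
qed

lemma kron_one: assumes "M \<in> carrier_mat d d" shows "kron M (1\<^sub>m 1) = M"
  by (rule eq_matI) (use assms in \<open>auto simp: kron_def\<close>)

lemma msos_zero1: "msos 1 (0\<^sub>m 1 1)"
  unfolding msos_def sosf_def by (intro conjI exI[of _ 0]) auto

lemma prod_list_mult_map: "prod_list (map g xs) * prod_list (map h xs) = prod_list (map (\<lambda>x. g x * (h x :: real)) xs)"
  by (induction xs) (auto simp: algebra_simps)

lemma prod_list_of_real: "prod_list (map (\<lambda>x. complex_of_real (g x)) xs) = complex_of_real (prod_list (map g xs))"
  by (induction xs) auto

lemma rep_R_carrier2: "as \<in> rep_set n S \<Longrightarrow> xs \<in> rep_set n Q \<Longrightarrow> (\<forall>a\<in>S. \<forall>x\<in>Q. R a x \<in> carrier_mat m m) \<Longrightarrow>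
  rep_R R as xs \<in> carrier_mat (m^n) (m^n)"
proof (induction n arbitrary: as xs)
  case 0 then show ?case by simp
next
  case (Suc n)
  obtain a as' where as: "as = a # as'" "a \<in> S" "as' \<in> rep_set n S" using Suc.prems(1) unfolding rep_set_def by (cases as) auto
  obtain x xs' where xs: "xs = x # xs'" "x \<in> Q" "xs' \<in> rep_set n Q" using Suc.prems(2) unfolding rep_set_def by (cases xs) auto
  have "rep_R R as' xs' \<in> carrier_mat (m^n) (m^n)" using Suc.IH[OF as(3) xs(3)] Suc.prems(3) by blast
  then show ?case using as xs Suc.prems(3) kron_carrier[of "R a x" m "rep_R R as' xs'" "m^n"] by simp
qed

lemma lower_strategy:
  fixes R :: "'a \<Rightarrow> nat \<Rightarrow> complex mat"
  assumes pr: "\<forall>a\<in>Ans. \<forall>x\<in>{0,1}. orth_proj m (R a x)" and fA: "finite Ans" and a: "a \<in> Ans" and b: "b \<in> Ans"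
    and n\<psi>: "nrm m \<psi> = 1"
  shows "\<exists>dA dB \<rho> PA PB. strategy (rep_set n {0,1}) (rep_set n Ans) (m^n) dA dB \<rho> PA PB \<and> fully_separable (m^n) dA dB \<rho> \<and>
     win_prob (rep_set n {0,1}) (rep_pi (\<lambda>_. 1/2)) (rep_set n Ans) (rep_R R) \<rho> PA PB =
       ((nrm m (app m (R a 0) \<psi>) + nrm m (app m (R b 1) \<psi>)) / 2)^n"
proof -
  define f where "f = (\<lambda>x::nat. if x = 0 then a else b)"
  define \<sigma> where "\<sigma> = outer m \<psi>"
  define \<rho> where "\<rho> = sig \<sigma> n"
  define PA where "PA = (\<lambda>xs as. if as = map f xs then 1\<^sub>m 1 else (0\<^sub>m 1 1 :: complex mat))"
  define g where "g = (\<lambda>x. nrm m (app m (R (f x) x) \<psi>))"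
  have Rc: "\<forall>a\<in>Ans. \<forall>x\<in>{0,1}. R a x \<in> carrier_mat m m" using pr unfolding orth_proj_def by blast
  have \<sigma>m: "msos m \<sigma>" unfolding \<sigma>_def by (rule outer_msos)
  have \<sigma>c: "\<sigma> \<in> carrier_mat m m" using msos_carrier[OF \<sigma>m] .
  have \<sigma>t: "mtrace \<sigma> = 1" unfolding \<sigma>_def outer_trace n\<psi> by simp
  have \<rho>m: "msos (m^n) \<rho>" unfolding \<rho>_def by (rule sig_msos[OF \<sigma>m])
  have \<rho>c: "\<rho> \<in> carrier_mat (m^n) (m^n)" using msos_carrier[OF \<rho>m] .
  have \<rho>d: "density (m^n) \<rho>" unfolding density_def using msos_psd[OF \<rho>m] sig_trace[OF \<sigma>m \<sigma>t] \<rho>_def by simp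
  have d1: "density 1 (1\<^sub>m 1)" unfolding density_def using msos_psd[OF msos_one] by (simp add: mtrace_def)
  have fmap: "map f xs \<in> rep_set n Ans" if "xs \<in> rep_set n {0,1}" for xs
    using that a b unfolding rep_set_def f_def by auto
  have fS: "finite (rep_set n Ans)" using finite_rep_set[OF fA] .
  have povmPA: "povm 1 (rep_set n Ans) (PA xs)" if xs: "xs \<in> rep_set n {0,1}" for xs
  proof -
    have "psd 1 (PA xs as)" for as
      unfolding PA_def using msos_psd[OF msos_one] msos_psd[OF msos_zero1] by simp
    moreover have "mat 1 1 (\<lambda>(i,j). \<Sum>as\<in>rep_set n Ans. PA xs as $$ (i,j)) = 1\<^sub>m 1"
    proof (rule eq_matI)
      fix i j assume "i < dim_row (1\<^sub>m 1 :: complex mat)" "j < dim_col (1\<^sub>m 1 :: complex mat)"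
      then have ij: "i = 0" "j = 0" by auto
      have "(\<Sum>as\<in>rep_set n Ans. PA xs as $$ (0,0)) = (\<Sum>as\<in>rep_set n Ans. if as = map f xs then 1 else 0)"
        unfolding PA_def by (rule sum.cong) auto
      also have "\<dots> = 1" using fmap[OF xs] fS by simp
      finally show "mat 1 1 (\<lambda>(i,j). \<Sum>as\<in>rep_set n Ans. PA xs as $$ (i,j)) $$ (i,j) = 1\<^sub>m 1 $$ (i,j)"
        using ij by simp
    qed auto
    ultimately show ?thesis unfolding povm_def by blast
  qed
  have strat: "strategy (rep_set n {0,1}) (rep_set n Ans) (m^n) 1 1 \<rho> PA PA"
    unfolding strategy_def using \<rho>d povmPA by simp
  have sep: "fully_separable (m^n) 1 1 \<rho>"
  proof -
    have s1: "\<And>F. (\<Sum>i<(1::nat). F i) = (F 0 :: complex)" by simp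
    have c1: "card {..<(1::nat)} = Suc 0" by simp
    have "\<rho> = mat (m^n*1*1) (m^n*1*1) (\<lambda>(r,c). \<Sum>i<(1::nat). complex_of_real ((\<lambda>_. 1) i) * kron (kron ((\<lambda>_. \<rho>) i) ((\<lambda>_. 1\<^sub>m 1) i)) ((\<lambda>_. 1\<^sub>m 1) i) $$ (r,c))"
      using kron_one[OF \<rho>c] \<rho>c c1 by (intro eq_matI) auto
    then show ?thesis unfolding fully_separable_def using \<rho>d d1
      by (intro exI[of _ "1::nat"] exI[of _ "\<lambda>_. 1::real"] exI[of _ "\<lambda>_. \<rho>"] exI[of _ "\<lambda>_. 1\<^sub>m 1"] conjI) auto
  qed
  have inner: "(\<Sum>as\<in>rep_set n Ans. Re (mtrace (kron (kron (rep_R R as xs) (PA xs as)) (PA xs as) * \<rho>))) = prod_list (map g xs)"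
    if xs: "xs \<in> rep_set n {0,1}" for xs
  proof -
    have lx: "length xs = n" and sx: "set xs \<subseteq> {0,1}" using xs unfolding rep_set_def by auto
    have trm: "Re (mtrace (kron (kron (rep_R R as xs) (PA xs as)) (PA xs as) * \<rho>)) = (if as = map f xs then prod_list (map g xs) else 0)"
      if as: "as \<in> rep_set n Ans" for as
    proof -
      have Ac: "rep_R R as xs \<in> carrier_mat (m^n) (m^n)" using rep_R_carrier2[OF as xs Rc] .
      show ?thesis
      proof (cases "as = map f xs")
        case True
        have "kron (kron (rep_R R as xs) (PA xs as)) (PA xs as) = rep_R R (map f xs) xs"
          using True kron_one[OF Ac] kron_one[of "rep_R R as xs" "m^n"] Ac unfolding PA_def by simp
        moreover have "\<forall>x\<in>set xs. R (f x) x \<in> carrier_mat m m" using Rc sx a b unfolding f_def by auto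
        ultimately have "mtrace (kron (kron (rep_R R as xs) (PA xs as)) (PA xs as) * \<rho>) = prod_list (map (\<lambda>x. mtrace (R (f x) x * \<sigma>)) xs)"
          unfolding \<rho>_def using rep_trace[of xs R f m \<sigma>] \<sigma>c \<sigma>m lx by simp
        also have "\<dots> = prod_list (map (\<lambda>x. complex_of_real (g x)) xs)"
        proof -
          have "mtrace (R (f x) x * \<sigma>) = complex_of_real (g x)" if "x \<in> set xs" for x
          proof -
            have pj: "orth_proj m (R (f x) x)" using pr sx that a b unfolding f_def by auto
            have "R (f x) x \<in> carrier_mat m m" using pj unfolding orth_proj_def by auto
            then show ?thesis unfolding \<sigma>_def g_def using trace_outer proj_qf[OF pj] by simp
          qed
          then show ?thesis by (metis (mono_tags, lifting) map_eq_conv)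
        qed
        also have "\<dots> = complex_of_real (prod_list (map g xs))" by (rule prod_list_of_real)
        finally show ?thesis using True by simp
      next
        case False
        have z: "PA xs as = 0\<^sub>m 1 1" using False unfolding PA_def by simp
        have "mtrace (kron (kron (rep_R R as xs) (PA xs as)) (PA xs as) * \<rho>) = 0"
          unfolding z using mtrace_kron3[OF Ac zero_carrier_mat zero_carrier_mat, of \<rho>] \<rho>c by simp
        then show ?thesis using False by simp
      qed
    qed
    have "(\<Sum>as\<in>rep_set n Ans. Re (mtrace (kron (kron (rep_R R as xs) (PA xs as)) (PA xs as) * \<rho>))) =
      (\<Sum>as\<in>rep_set n Ans. if as = map f xs then prod_list (map g xs) else 0)"
      by (rule sum.cong) (use trm in auto)
    also have "\<dots> = prod_list (map g xs)" using fmap[OF xs] fS by simp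
    finally show ?thesis .
  qed
  have "win_prob (rep_set n {0,1}) (rep_pi (\<lambda>_. 1/2)) (rep_set n Ans) (rep_R R) \<rho> PA PA =
      (\<Sum>xs\<in>rep_set n {0,1}. prod_list (map (\<lambda>x. 1/2 * g x) xs))"
    unfolding win_prob_def rep_pi_def
  proof (rule sum.cong[OF refl])
    fix xs :: "nat list" assume xs: "xs \<in> rep_set n {0,1}"
    show "prod_list (map (\<lambda>_. 1/2) xs) * (\<Sum>as\<in>rep_set n Ans. Re (mtrace (kron (kron (rep_R R as xs) (PA xs as)) (PA xs as) * \<rho>)))
      = prod_list (map (\<lambda>x. 1/2 * g x) xs)"
      unfolding inner[OF xs] prod_list_mult_map[of "\<lambda>_. 1/2" xs g] ..
  qed
  also have "\<dots> = (\<Sum>x\<in>{0,1}. 1/2 * g x)^n" by (rule sum_rep_set_prod)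
  also have "\<dots> = ((nrm m (app m (R a 0) \<psi>) + nrm m (app m (R b 1) \<psi>)) / 2)^n"
    unfolding g_def f_def by (simp add: add_divide_distrib)
  finally show ?thesis using strat sep by blast
qed

lemma win_le:
  assumes fQ: "finite Q" and fS: "finite S" and pd: "\<forall>x\<in>Q. 0 \<le> pd x"
    and P: "\<forall>x\<in>Q. \<forall>a\<in>S. msos M (RR a x)"
    and U: "\<forall>x\<in>Q. \<forall>i<M. \<forall>j<M. (\<Sum>a\<in>S. RR a x $$ (i,j)) = (if i = j then 1 else 0)"
    and st: "strategy Q S M dA dB \<rho> PA PB"
  shows "win_prob Q pd S RR \<rho> PA PB \<le> sum pd Q"
  unfolding win_prob_def
proof (rule sum_mono)
  fix x assume x: "x \<in> Q"
  have D: "density (M*dA*dB) \<rho>" and PA: "povm dA S (PA x)" and PB: "povm dB S (PB x)"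
    using st x unfolding strategy_def by auto
  have "(\<Sum>a\<in>S. Re (mtrace (kron (kron (RR a x) (PA x a)) (PB x a) * \<rho>))) \<le> 1"
    using round_le[OF fS _ _ PA PB D, of "\<lambda>a. RR a x"] P U x by blast
  then show "pd x * (\<Sum>a\<in>S. Re (mtrace (kron (kron (RR a x) (PA x a)) (PB x a) * \<rho>))) \<le> pd x"
    using pd x by (simp add: mult_left_le)
qed

lemma limit_arg:
  fixes u s :: real
  assumes s: "0 < s" and h: "\<forall>t. 0 < t \<longrightarrow> t < s \<longrightarrow> ((1+t)/2)^n \<le> u"
  shows "((1+s)/2)^n \<le> u"
proof (rule ccontr)
  assume "\<not> ((1+s)/2)^n \<le> u"
  then have lt: "u < ((1+s)/2)^n" by simp
  have "((\<lambda>t. ((1+t)/2)^n) \<longlongrightarrow> ((1+s)/2)^n) (at_left s)" by (intro tendsto_intros) auto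
  then have e1: "eventually (\<lambda>t. u < ((1+t)/2)^n) (at_left s)" using lt by (rule order_tendstoD(1))
  have e2: "eventually (\<lambda>t. t \<in> {0<..<s}) (at_left s)" using eventually_at_left_real[OF s] .
  have nb: "at_left s \<noteq> bot" using trivial_limit_at_left_real[of s] unfolding trivial_limit_def .
  obtain t where "u < ((1+t)/2)^n \<and> t \<in> {0<..<s}" using eventually_happens'[OF nb eventually_conj[OF e1 e2]] by blast
  then show False using h by force
qed

theorem mainTheorem6:
  fixes Ans :: "'a set" and m :: nat and R :: "'a \<Rightarrow> nat \<Rightarrow> complex mat"
    and c :: real and n :: nat
  assumes "moe_game {0,1} (\<lambda>_. 1/2) Ans m R"
    and "\<forall>a\<in>Ans. \<forall>x\<in>{0,1}. orth_proj m (R a x)"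
    and "c = Max {(op_norm (msqrt (R a 0) * msqrt (R b 1)))\<^sup>2 | a b. a \<in> Ans \<and> b \<in> Ans}"
    and "0 < n"
  shows "qvalue (rep_set n {0,1}) (rep_pi (\<lambda>_. 1/2)) (rep_set n Ans) (m ^ n) (rep_R R)
           \<ge> uvalue (rep_set n {0,1}) (rep_pi (\<lambda>_. 1/2)) (rep_set n Ans) (m ^ n) (rep_R R)
       \<and> uvalue (rep_set n {0,1}) (rep_pi (\<lambda>_. 1/2)) (rep_set n Ans) (m ^ n) (rep_R R)
           \<ge> (1/2 + 1/2 * sqrt c) ^ n"
proof -
  note G = assms(1) and pr = assms(2) and cdef = assms(3)
  have fA: "finite Ans" and neA: "Ans \<noteq> {}" and m0: "0 < m" and pv: "\<forall>x\<in>{0,1}. povm m Ans (\<lambda>a. R a x)"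
    using G unfolding moe_game_def by auto
  let ?Q = "rep_set n {0::nat,1}" and ?S = "rep_set n Ans" and ?pd = "rep_pi (\<lambda>_::nat. 1/2::real)"
  define qset where "qset = {win_prob ?Q ?pd ?S (rep_R R) \<rho> PA PB | dA dB \<rho> PA PB. strategy ?Q ?S (m^n) dA dB \<rho> PA PB}"
  define uset where "uset = {win_prob ?Q ?pd ?S (rep_R R) \<rho> PA PB | dA dB \<rho> PA PB.
      strategy ?Q ?S (m^n) dA dB \<rho> PA PB \<and> fully_separable (m^n) dA dB \<rho>}"
  have qv: "qvalue ?Q ?pd ?S (m^n) (rep_R R) = Sup qset" unfolding qvalue_def qset_def ..
  have uv: "uvalue ?Q ?pd ?S (m^n) (rep_R R) = Sup uset" unfolding uvalue_def uset_def ..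
  have sub: "uset \<subseteq> qset"
  proof
    fix y assume "y \<in> uset"
    then obtain dA dB \<rho> PA PB where y: "y = win_prob ?Q ?pd ?S (rep_R R) \<rho> PA PB" "strategy ?Q ?S (m^n) dA dB \<rho> PA PB"
      unfolding uset_def mem_Collect_eq by blast
    then show "y \<in> qset" unfolding qset_def
      by (intro CollectI exI[of _ dA] exI[of _ dB] exI[of _ \<rho>] exI[of _ PA] exI[of _ PB]) simp
  qed
  have Pm: "\<forall>x\<in>{0::nat,1}. \<forall>a\<in>Ans. msos m (R a x)"
  proof (intro ballI)
    fix x a assume x: "x \<in> {0::nat,1}" and a: "a \<in> Ans"
    have "povm m Ans (\<lambda>a. R a x)" using pv x by blast
    from povm_psd[OF this a] show "msos m (R a x)" using psd_msos by simp
  qed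
  have Um: "\<forall>x\<in>{0::nat,1}. \<forall>i<m. \<forall>j<m. (\<Sum>a\<in>Ans. R a x $$ (i,j)) = (if i = j then 1 else 0)"
  proof (intro ballI allI impI)
    fix x i j assume x: "x \<in> {0::nat,1}" and ij: "i < m" "j < m"
    have "povm m Ans (\<lambda>a. R a x)" using pv x by blast
    from povm_entries[OF this ij] show "(\<Sum>a\<in>Ans. R a x $$ (i,j)) = (if i = j then 1 else 0)" .
  qed
  have RP: "\<forall>xs\<in>?Q. \<forall>as\<in>?S. msos (m^n) (rep_R R as xs)"
    using rep_props[OF Pm Um] by blast
  have RU: "\<forall>xs\<in>?Q. \<forall>i<m^n. \<forall>j<m^n. (\<Sum>as\<in>?S. rep_R R as xs $$ (i,j)) = (if i = j then 1 else 0)"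
    using rep_props[OF Pm Um] by blast
  have pdnn0: "0 \<le> prod_list (map (\<lambda>_::nat. 1/2::real) xs)" for xs by (induction xs) auto
  have pdnn: "\<forall>xs\<in>?Q. 0 \<le> ?pd xs" unfolding rep_pi_def using pdnn0 by blast
  have bddq: "bdd_above qset"
  proof -
    have "x \<le> sum ?pd ?Q" if xq: "x \<in> qset" for x
    proof -
      from xq have "\<exists>dA dB \<rho> PA PB. x = win_prob ?Q ?pd ?S (rep_R R) \<rho> PA PB \<and> strategy ?Q ?S (m^n) dA dB \<rho> PA PB"
        unfolding qset_def by auto
      then obtain dA dB \<rho> PA PB where "x = win_prob ?Q ?pd ?S (rep_R R) \<rho> PA PB" "strategy ?Q ?S (m^n) dA dB \<rho> PA PB"
        by auto
      then show ?thesis using win_le[OF finite_rep_set finite_rep_set[OF fA] pdnn RP RU] by auto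
    qed
    then show ?thesis unfolding bdd_above_def by blast
  qed
  have bddu: "bdd_above uset" using bdd_above_mono[OF bddq sub] .
  have inu: "((nrm m (app m (R a 0) \<psi>) + nrm m (app m (R b 1) \<psi>)) / 2)^n \<in> uset"
    if abp: "a \<in> Ans" "b \<in> Ans" "nrm m \<psi> = 1" for a b \<psi>
  proof -
    obtain dA dB \<rho> PA PB where st: "strategy ?Q ?S (m^n) dA dB \<rho> PA PB" "fully_separable (m^n) dA dB \<rho>"
      "win_prob ?Q ?pd ?S (rep_R R) \<rho> PA PB = ((nrm m (app m (R a 0) \<psi>) + nrm m (app m (R b 1) \<psi>)) / 2)^n"
      using lower_strategy[OF pr fA abp, of n] by auto
    then show ?thesis unfolding uset_def
      by (intro CollectI exI[of _ dA] exI[of _ dB] exI[of _ \<rho>] exI[of _ PA] exI[of _ PB]) simp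
  qed
  have achieve: "v^n \<le> Sup uset" if "a \<in> Ans" "b \<in> Ans" "nrm m \<psi> = 1" "0 \<le> v"
      "2 * v \<le> Re (qf m (\<lambda>r c. R a 0 $$ (r,c)) \<psi>) + Re (qf m (\<lambda>r c. R b 1 $$ (r,c)) \<psi>)" for a b \<psi> v
  proof -
    have pa: "orth_proj m (R a 0)" and pb: "orth_proj m (R b 1)" using pr that by auto
    have "v \<le> (nrm m (app m (R a 0) \<psi>) + nrm m (app m (R b 1) \<psi>)) / 2"
      using that(5) proj_qf[OF pa, of \<psi>] proj_qf[OF pb, of \<psi>] by simp
    then have "v^n \<le> ((nrm m (app m (R a 0) \<psi>) + nrm m (app m (R b 1) \<psi>)) / 2)^n"
      using that(4) by (intro power_mono) auto
    also have "\<dots> \<le> Sup uset" using cSup_upper[OF inu[OF that(1-3)] bddu] .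
    finally show ?thesis .
  qed
  obtain a1 where a1: "a1 \<in> Ans" using neA by blast
  have une: "uset \<noteq> {}"
  proof -
    define e where "e = (\<lambda>k::nat. if k = 0 then 1 else (0::complex))"
    have "nrm m e = (\<Sum>i<m. if i = 0 then 1 else 0)" unfolding nrm_def e_def by (rule sum.cong) auto
    also have "\<dots> = 1" using m0 by (simp add: sum.delta)
    finally show ?thesis using inu[OF a1 a1] by blast
  qed
  have part1: "Sup uset \<le> Sup qset" by (rule cSup_subset_mono[OF une bddq sub])
  define F where "F = (\<lambda>p. (op_norm (msqrt (R (fst p) 0) * msqrt (R (snd p) 1)))\<^sup>2)"
  have cset: "{(op_norm (msqrt (R a 0) * msqrt (R b 1)))\<^sup>2 | a b. a \<in> Ans \<and> b \<in> Ans} = F ` (Ans \<times> Ans)"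
    unfolding F_def by force
  have "c \<in> F ` (Ans \<times> Ans)" unfolding cdef cset using fA neA by (intro Max_in) auto
  then obtain a0 b0 where ab: "a0 \<in> Ans" "b0 \<in> Ans" "c = F (a0, b0)" by auto
  have P0: "orth_proj m (R a0 0)" and Q0: "orth_proj m (R b0 1)" using pr ab by auto
  define s where "s = op_norm (R a0 0 * R b0 1)"
  have cs: "c = s^2" unfolding ab(3) F_def s_def using msqrt_proj[OF P0] msqrt_proj[OF Q0] by simp
  have s0: "0 \<le> s" unfolding s_def using opn(1)[OF P0 Q0 m0] .
  have sqc: "sqrt c = s" unfolding cs using s0 by simp
  have tgt: "(1/2 + 1/2 * sqrt c) = (1 + s) / 2" unfolding sqc by simp
  have half: "(1/2)^n \<le> Sup uset"
  proof -
    have "\<exists>a\<in>Ans. \<exists>i<m. \<exists>j<m. R a 0 $$ (i,j) \<noteq> 0"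
    proof (rule ccontr)
      assume "\<not> ?thesis"
      then have "(\<Sum>a\<in>Ans. R a 0 $$ (0,0)) = 0" using m0 by simp
      then show False using Um m0 by force
    qed
    then obtain a i j where aij: "a \<in> Ans" "i < m" "j < m" "R a 0 $$ (i,j) \<noteq> 0" by blast
    have pa: "orth_proj m (R a 0)" and pb: "orth_proj m (R a1 1)" using pr aij a1 by auto
    obtain \<psi> where "nrm m \<psi> = 1" "1 \<le> Re (qf m (\<lambda>r c. R a 0 $$ (r,c)) \<psi>) + Re (qf m (\<lambda>r c. R a1 1 $$ (r,c)) \<psi>)"
      using construct_psi0[OF pa pb aij(2-4)] by blast
    then show ?thesis using achieve[OF aij(1) a1, of \<psi> "1/2"] by simp
  qed
  have part2: "((1+s)/2)^n \<le> Sup uset"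
  proof (cases "s = 0")
    case True then show ?thesis using half by simp
  next
    case False
    then have sp: "0 < s" using s0 by simp
    show ?thesis
    proof (rule limit_arg[OF sp], intro allI impI)
      fix t assume t: "0 < t" "t < s"
      obtain w where w: "nrm m w = 1" "t < sqrt (nrm m (app m (R a0 0) (app m (R b0 1) w)))"
        using opn(3)[OF P0 Q0 m0, of t] t unfolding s_def by blast
      obtain \<psi> where "nrm m \<psi> = 1" "1 + t \<le> Re (qf m (\<lambda>r c. R a0 0 $$ (r,c)) \<psi>) + Re (qf m (\<lambda>r c. R b0 1 $$ (r,c)) \<psi>)"
        using construct_psi[OF P0 Q0 w(1) _ w(2)] t by auto
      then show "((1+t)/2)^n \<le> Sup uset" using achieve[OF ab(1,2), of \<psi> "(1+t)/2"] t by simp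
    qed
  qed
  show ?thesis unfolding qv uv tgt using part1 part2 by simp
qed

end
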